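(* Let $\beta$ be generic and $x_k(t),y_k(t)$ smooth with $\dot x_k^2\ne1$, $\dot y_k^2\neq 1$, $\wp'(x_k),\wp'(y_k)\ne0$; put $u_k=\wp(x_k)$, $v_k=\wp(y_k)$. Then the system $$\frac{\dot x_k+1}{\dot x_k-1}=\frac{F(x_k,y_k;\beta)}{F(x_k,x_{k+1};\beta)},\qquad \frac{\dot y_k-1}{\dot y_k+1}=\frac{F(y_k,x_k;\beta)}{F(y_k,y_{k-1};\beta)}$$ is equivalent to $$\dot u_k=\frac{2\rho(u_{k+1},u_k,v_k;\beta)}{u_{k+1}-v_k},\qquad \dot v_k=\frac{2\rho(u_k,v_k,v_{k-1};\beta)}{u_k-v_{k-1}}.$$
   Context: $\wp,\sigma$: Weierstrass functions (invariants $g_2,g_3$, nondegenerate). $F(x_0,x_1;\alpha)=\frac{\sigma(x_0+x_1+\alpha)\sigma(x_0-x_1+\alpha)}{\sigma(x_0+x_1-\alpha)\sigma(x_0-x_1-\alpha)}$. For $u,w\in\mathbb C$ and $v=\wp(z)$ define $$\rho(u,v,w;\beta)=\frac{(\wp(z)-\wp(\beta))^2}{\wp'(\beta)}\Big(uw-\big(\wp(z+\beta)+\wp(z-\beta)\big)\frac{u+w}{2}+\wp(z+\beta)\wp(z-\beta)\Big)$$ (this depends on $z$ only through $v$; it is symmetric in $u,w$). *)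

theory Defs
  imports "HOL-Analysis.Analysis"
begin

definition lattice :: "complex \<Rightarrow> complex \<Rightarrow> complex set" where
  "lattice w1 w2 = {of_int m * w1 + of_int n * w2 | m n. True}"

definition lattice_nondeg :: "complex \<Rightarrow> complex \<Rightarrow> bool" where
  "lattice_nondeg w1 w2 \<longleftrightarrow> w1 \<noteq> 0 \<and> w2 \<noteq> 0 \<and> Im (w2 / w1) \<noteq> 0"

definition wp :: "complex \<Rightarrow> complex \<Rightarrow> complex \<Rightarrow> complex" where
  "wp w1 w2 z = 1 / z^2 + infsum (\<lambda>w. 1 / (z - w)^2 - 1 / w^2) (lattice w1 w2 - {0})"

definition wp' :: "complex \<Rightarrow> complex \<Rightarrow> complex \<Rightarrow> complex" where
  "wp' w1 w2 z = deriv (wp w1 w2) z"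

definition weierstrass_E2 :: "complex \<Rightarrow> complex" where
  "weierstrass_E2 t = (1 - t) * exp (t + t^2 / 2)"

text \<open>An enumeration of the nonzero lattice points; the (absolutely convergent)
  product does not depend on the choice.\<close>
definition lattice_enum :: "complex \<Rightarrow> complex \<Rightarrow> nat \<Rightarrow> complex" where
  "lattice_enum w1 w2 = (SOME f. bij_betw f UNIV (lattice w1 w2 - {0}))"

definition wsigma :: "complex \<Rightarrow> complex \<Rightarrow> complex \<Rightarrow> complex" where
  "wsigma w1 w2 z = z * prodinf (\<lambda>n. weierstrass_E2 (z / lattice_enum w1 w2 n))"

definition Fsig :: "complex \<Rightarrow> complex \<Rightarrow> complex \<Rightarrow> complex \<Rightarrow> complex \<Rightarrow> complex" where
  "Fsig w1 w2 x0 x1 \<alpha> =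
     (wsigma w1 w2 (x0 + x1 + \<alpha>) * wsigma w1 w2 (x0 - x1 + \<alpha>)) /
     (wsigma w1 w2 (x0 + x1 - \<alpha>) * wsigma w1 w2 (x0 - x1 - \<alpha>))"

definition Fsig_ok :: "complex \<Rightarrow> complex \<Rightarrow> complex \<Rightarrow> complex \<Rightarrow> complex \<Rightarrow> bool" where
  "Fsig_ok w1 w2 x0 x1 \<alpha> \<longleftrightarrow>
     wsigma w1 w2 (x0 + x1 + \<alpha>) \<noteq> 0 \<and> wsigma w1 w2 (x0 - x1 + \<alpha>) \<noteq> 0 \<and>
     wsigma w1 w2 (x0 + x1 - \<alpha>) \<noteq> 0 \<and> wsigma w1 w2 (x0 - x1 - \<alpha>) \<noteq> 0"

text \<open>rho(u, v, w; beta) with v = wp(z); the argument z is passed instead of v.\<close>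
definition rho :: "complex \<Rightarrow> complex \<Rightarrow> complex \<Rightarrow> complex \<Rightarrow> complex \<Rightarrow> complex \<Rightarrow> complex" where
  "rho w1 w2 u z w \<beta> =
     (wp w1 w2 z - wp w1 w2 \<beta>)^2 / wp' w1 w2 \<beta> *
     (u * w - (wp w1 w2 (z + \<beta>) + wp w1 w2 (z - \<beta>)) * (u + w) / 2
        + wp w1 w2 (z + \<beta>) * wp w1 w2 (z - \<beta>))"

definition tder :: "(real \<Rightarrow> complex) \<Rightarrow> real \<Rightarrow> complex" where
  "tder f t = vector_derivative f (at t)"

definition smooth_rc :: "(real \<Rightarrow> complex) \<Rightarrow> bool" where
  "smooth_rc f \<longleftrightarrow> (\<forall>n t. (tder ^^ n) f differentiable (at t))"

end

theory Submission
  imports Defs "HOL-Complex_Analysis.Complex_Analysis"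
begin

lemma lattice_lower_bound:
  assumes "lattice_nondeg w1 w2"
  shows "\<exists>c>0. \<forall>s t::real. norm (of_real s * w1 + of_real t * w2) \<ge> c * (\<bar>s\<bar> + \<bar>t\<bar>)"
proof -
  define \<tau> where "\<tau> = w2 / w1"
  define p where "p = Re \<tau>"
  define q where "q = Im \<tau>"
  have w1: "w1 \<noteq> 0" and q: "q \<noteq> 0" using assms by (auto simp: lattice_nondeg_def q_def \<tau>_def)
  define K where "K = 1 + (\<bar>p\<bar> + 1) / \<bar>q\<bar>"
  have K: "K > 0" unfolding K_def using q by (auto intro!: add_pos_nonneg)
  show ?thesis
  proof (intro exI[of _ "norm w1 / K"] conjI allI)
    show "norm w1 / K > 0" using w1 K by auto
    fix s t :: real
    have eq: "of_real s * w1 + of_real t * w2 = w1 * (of_real s + of_real t * \<tau>)"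
      using w1 by (simp add: \<tau>_def field_simps)
    define z where "z = of_real s + of_real t * \<tau>"
    have ReI: "Re z = s + t * p" "Im z = t * q" by (simp_all add: z_def p_def q_def)
    have n1: "norm z \<ge> \<bar>t\<bar> * \<bar>q\<bar>" using abs_Im_le_cmod[of z] ReI by (simp add: abs_mult)
    have n2: "norm z \<ge> \<bar>s\<bar> - \<bar>t\<bar> * \<bar>p\<bar>"
    proof -
      have "\<bar>s + t * p\<bar> \<ge> \<bar>s\<bar> - \<bar>t\<bar> * \<bar>p\<bar>" using abs_triangle_ineq[of "s+t*p" "-(t*p)"] by (simp add: abs_mult)
      thus ?thesis using abs_Re_le_cmod[of z] ReI by linarith
    qed
    have e1: "norm z * K = norm z + (\<bar>p\<bar> + 1) * (norm z / \<bar>q\<bar>)" using q by (simp add: K_def field_simps)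
    have e2: "(\<bar>p\<bar> + 1) * (norm z / \<bar>q\<bar>) \<ge> (\<bar>p\<bar> + 1) * \<bar>t\<bar>"
      using n1 q by (intro mult_left_mono) (auto simp: field_simps)
    have "norm z * K \<ge> \<bar>s\<bar> + \<bar>t\<bar>" using n2 e1 e2 by (simp add: algebra_simps)
    hence "norm w1 * (norm z * K) \<ge> norm w1 * (\<bar>s\<bar> + \<bar>t\<bar>)" by (intro mult_left_mono) auto
    thus "norm w1 / K * (\<bar>s\<bar> + \<bar>t\<bar>) \<le> norm (of_real s * w1 + of_real t * w2)"
      using K unfolding eq z_def[symmetric] by (simp add: norm_mult field_simps)
  qed
qed

lemma sum_inv_sq_le: "(\<Sum>k=1..K. 1 / (real k)^2) \<le> 2 - 1 / real K" if "K \<ge> 1" for K :: nat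
  using that
proof (induction K rule: dec_induct)
  case base
  then show ?case by simp
next
  case (step K)
  have "(\<Sum>k=1..Suc K. 1 / (real k)^2) = (\<Sum>k=1..K. 1 / (real k)^2) + 1 / (real K + 1)^2"
    by simp
  also have "\<dots> \<le> 2 - 1 / real K + 1 / (real K + 1)^2" using step by simp
  also have "\<dots> \<le> 2 - 1 / real (Suc K)"
  proof -
    have K: "real K \<ge> 1" using step by simp
    have "1 / (real K + 1)^2 \<le> 1 / real K - 1 / (real K + 1)"
    proof -
      have e: "1 / real K - 1 / (real K + 1) = 1 / (real K * (real K + 1))" using K by (simp add: field_simps)
      have "1 / (real K + 1)^2 \<le> 1 / (real K * (real K + 1))"
        using K by (intro divide_left_mono) (auto simp: power2_eq_square intro!: mult_right_mono)
      thus ?thesis using e by simp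
    qed
    thus ?thesis by (simp add: add.commute)
  qed
  finally show ?case .
qed

definition shell :: "nat \<Rightarrow> (int \<times> int) set" where
  "shell k = {p. \<bar>fst p\<bar> + \<bar>snd p\<bar> = int k}"

lemma shell_subset: "shell k \<subseteq> (\<lambda>(m, s). (m, s * (int k - \<bar>m\<bar>))) ` ({-int k..int k} \<times> {-1, 1})"
proof
  fix p assume "p \<in> shell k"
  then obtain m n where p: "p = (m, n)" and e: "\<bar>m\<bar> + \<bar>n\<bar> = int k" by (cases p) (auto simp: shell_def)
  show "p \<in> (\<lambda>(m, s). (m, s * (int k - \<bar>m\<bar>))) ` ({-int k..int k} \<times> {-1, 1})"
  proof (cases "n \<ge> 0")
    case True
    thus ?thesis using e p by (auto intro!: image_eqI[of _ _ "(m, 1)"])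
  next
    case False
    thus ?thesis using e p by (auto intro!: image_eqI[of _ _ "(m, -1)"])
  qed
qed

lemma shell_finite: "finite (shell k)"
  by (rule finite_subset[OF shell_subset]) auto

lemma shell_card: "k \<ge> 1 \<Longrightarrow> card (shell k) \<le> 6 * k"
proof -
  assume k: "k \<ge> 1"
  have "card (shell k) \<le> card ((\<lambda>(m, s). (m, s * (int k - \<bar>m\<bar>))) ` ({-int k..int k} \<times> {-1::int, 1}))"
    by (intro card_mono shell_subset) auto
  also have "\<dots> \<le> card ({-int k..int k} \<times> {-1::int, 1})" by (rule card_image_le) auto
  also have "\<dots> = (2 * k + 1) * 2" by (simp add: card_cartesian_product)
  also have "\<dots> \<le> 6 * k" using k by simp
  finally show ?thesis .
qed

definition fZ :: "int \<times> int \<Rightarrow> real" where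
  "fZ p = 1 / (real_of_int (\<bar>fst p\<bar> + \<bar>snd p\<bar>))^3"

lemma fZ_nonneg: "fZ p \<ge> 0" by (simp add: fZ_def)

lemma shell_sum: "k \<ge> 1 \<Longrightarrow> sum fZ (shell k) \<le> 6 / (real k)^2"
proof -
  assume k: "k \<ge> 1"
  have "sum fZ (shell k) = (\<Sum>p\<in>shell k. 1 / (real k)^3)"
    by (intro sum.cong) (auto simp: fZ_def shell_def)
  also have "\<dots> = real (card (shell k)) / (real k)^3" by simp
  also have "\<dots> \<le> real (6 * k) / (real k)^3"
    using shell_card[OF k] by (intro divide_right_mono) auto
  also have "\<dots> = 6 / (real k)^2" using k by (simp add: field_simps power3_eq_cube power2_eq_square)
  finally show ?thesis .
qed

lemma fZ_finite_sum_bound: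
  assumes "finite G" "(0, 0) \<notin> G"
  shows "sum fZ G \<le> 12"
proof (cases "G = {}")
  case True thus ?thesis by simp
next
  case False
  define K where "K = Max ((\<lambda>p. nat (\<bar>fst p\<bar> + \<bar>snd p\<bar>)) ` G)"
  have sub: "G \<subseteq> (\<Union>k\<in>{1..K}. shell k)"
  proof
    fix p assume p: "p \<in> G"
    have "nat (\<bar>fst p\<bar> + \<bar>snd p\<bar>) \<le> K" unfolding K_def using assms p by (intro Max_ge) auto
    moreover have "p \<noteq> (0, 0)" using p assms by auto
    hence "nat (\<bar>fst p\<bar> + \<bar>snd p\<bar>) \<ge> 1" by (cases p) auto
    ultimately show "p \<in> (\<Union>k\<in>{1..K}. shell k)"
      by (intro UN_I[of "nat (\<bar>fst p\<bar> + \<bar>snd p\<bar>)"]) (auto simp: shell_def)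
  qed
  have "sum fZ G \<le> sum fZ (\<Union>k\<in>{1..K}. shell k)"
    by (intro sum_mono2 sub) (auto simp: shell_finite fZ_nonneg)
  also have "\<dots> = (\<Sum>k=1..K. sum fZ (shell k))"
    by (intro sum.UNION_disjoint) (auto simp: shell_finite, auto simp: shell_def)
  also have "\<dots> \<le> (\<Sum>k=1..K. 6 / (real k)^2)" by (intro sum_mono shell_sum) auto
  also have "\<dots> = 6 * (\<Sum>k=1..K. 1 / (real k)^2)" by (simp add: sum_distrib_left)
  also have "\<dots> \<le> 12"
  proof (cases "K \<ge> 1")
    case True
    have "1 / real K \<ge> 0" by simp
    with sum_inv_sq_le[OF True] show ?thesis by linarith
  next
    case False thus ?thesis by simp
  qed
  finally show ?thesis .
qed


locale ell =
  fixes w1 w2 :: complex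
  assumes nd: "lattice_nondeg w1 w2"
begin

abbreviation L where "L \<equiv> lattice w1 w2"

lemma w1_nz: "w1 \<noteq> 0" and w2_nz: "w2 \<noteq> 0"
  using nd by (auto simp: lattice_nondeg_def)

lemma in_L_iff: "z \<in> L \<longleftrightarrow> (\<exists>m n::int. z = of_int m * w1 + of_int n * w2)"
  by (auto simp: lattice_def)

lemma L_0 [simp]: "0 \<in> L"
  unfolding in_L_iff by (intro exI[of _ 0]) auto

lemma L_w1 [simp]: "w1 \<in> L"
  unfolding in_L_iff by (intro exI[of _ 1] exI[of _ 0]) auto

lemma L_w2 [simp]: "w2 \<in> L"
  unfolding in_L_iff by (intro exI[of _ 0] exI[of _ 1]) auto

lemma L_add: "a \<in> L \<Longrightarrow> b \<in> L \<Longrightarrow> a + b \<in> L"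
proof -
  assume "a \<in> L" "b \<in> L"
  then obtain m n m' n' :: int where "a = of_int m * w1 + of_int n * w2" "b = of_int m' * w1 + of_int n' * w2"
    by (auto simp: in_L_iff)
  hence "a + b = of_int (m + m') * w1 + of_int (n + n') * w2" by (simp add: algebra_simps)
  thus ?thesis unfolding in_L_iff by blast
qed

lemma L_uminus: "a \<in> L \<Longrightarrow> -a \<in> L"
proof -
  assume "a \<in> L"
  then obtain m n :: int where "a = of_int m * w1 + of_int n * w2" by (auto simp: in_L_iff)
  hence "-a = of_int (-m) * w1 + of_int (-n) * w2" by (simp add: algebra_simps)
  thus ?thesis unfolding in_L_iff by blast
qed

lemma L_uminus_iff [simp]: "-a \<in> L \<longleftrightarrow> a \<in> L"
  using L_uminus[of a] L_uminus[of "-a"] by auto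

lemma L_diff: "a \<in> L \<Longrightarrow> b \<in> L \<Longrightarrow> a - b \<in> L"
  using L_add[of a "-b"] by simp

lemma L_add_iff: "b \<in> L \<Longrightarrow> a + b \<in> L \<longleftrightarrow> a \<in> L"
  using L_add[of "a + b" "-b"] L_add[of a b] by auto

lemma L_add_iff2: "b \<in> L \<Longrightarrow> b + a \<in> L \<longleftrightarrow> a \<in> L"
  using L_add_iff[of b a] by (simp add: add.commute)

lemma L_diff_iff: "b \<in> L \<Longrightarrow> a - b \<in> L \<longleftrightarrow> a \<in> L"
  using L_add_iff[of "-b" a] by simp

lemma L_int_mult: "a \<in> L \<Longrightarrow> of_int k * a \<in> L"
proof -
  assume "a \<in> L"
  then obtain m n :: int where "a = of_int m * w1 + of_int n * w2" by (auto simp: in_L_iff)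
  hence "of_int k * a = of_int (k * m) * w1 + of_int (k * n) * w2" by (simp add: algebra_simps)
  thus ?thesis unfolding in_L_iff by blast
qed

definition c0 where "c0 = (SOME c. c > 0 \<and> (\<forall>s t::real. norm (of_real s * w1 + of_real t * w2) \<ge> c * (\<bar>s\<bar> + \<bar>t\<bar>)))"

lemma c0: "c0 > 0" "norm (of_real s * w1 + of_real t * w2) \<ge> c0 * (\<bar>s\<bar> + \<bar>t\<bar>)"
  using someI_ex[OF lattice_lower_bound[OF nd]] unfolding c0_def[symmetric] by auto

lemma c0_int: "norm (of_int m * w1 + of_int n * w2) \<ge> c0 * real_of_int (\<bar>m\<bar> + \<bar>n\<bar>)"
  using c0(2)[of "of_int m" "of_int n"] by simp

lemma indep: "of_real s * w1 + of_real t * w2 = 0 \<Longrightarrow> s = 0 \<and> t = 0"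
proof -
  assume "of_real s * w1 + of_real t * w2 = 0"
  hence "c0 * (\<bar>s\<bar> + \<bar>t\<bar>) \<le> 0" using c0(2)[of s t] by simp
  hence "\<bar>s\<bar> + \<bar>t\<bar> \<le> 0" using c0(1) by (simp add: mult_le_0_iff)
  thus ?thesis by linarith
qed

lemma L_norm_ge: "\<omega> \<in> L \<Longrightarrow> \<omega> \<noteq> 0 \<Longrightarrow> norm \<omega> \<ge> c0"
proof -
  assume "\<omega> \<in> L" "\<omega> \<noteq> 0"
  then obtain m n :: int where \<omega>: "\<omega> = of_int m * w1 + of_int n * w2" by (auto simp: in_L_iff)
  with \<open>\<omega> \<noteq> 0\<close> have "\<bar>m\<bar> + \<bar>n\<bar> \<ge> 1" by (cases "m = 0"; cases "n = 0") auto
  hence "c0 * 1 \<le> c0 * real_of_int (\<bar>m\<bar> + \<bar>n\<bar>)" using c0(1)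
    by (intro mult_left_mono) linarith+
  thus ?thesis using c0_int[of m n] \<omega> by simp
qed

lemma L_sep: "a \<in> L \<Longrightarrow> b \<in> L \<Longrightarrow> a \<noteq> b \<Longrightarrow> dist a b \<ge> c0"
  using L_norm_ge[of "a - b"] L_diff[of a b] by (simp add: dist_norm)

lemma not_islimpt_L: "\<not> z islimpt L"
proof
  assume "z islimpt L"
  then obtain x where x: "x \<in> L" "x \<noteq> z" "dist x z < c0 / 2"
    using c0(1) unfolding islimpt_approachable by (meson half_gt_zero)
  from \<open>z islimpt L\<close> obtain y where y: "y \<in> L" "y \<noteq> z" "dist y z < dist x z"
    using x(2) unfolding islimpt_approachable by (meson zero_less_dist_iff)
  have "x \<noteq> y" using y by auto
  hence "dist x y \<ge> c0" using L_sep x y by auto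
  moreover have "dist x y \<le> dist x z + dist y z" by (metis dist_commute dist_triangle)
  ultimately show False using x y by linarith
qed

lemma closed_L: "closed L"
  using not_islimpt_L closed_limpt by blast

lemma open_compl_L: "open (-L)"
  using closed_L by (simp add: closed_def)

lemma L_range: "L = range (\<lambda>(m::int, n::int). of_int m * w1 + of_int n * w2)"
proof (intro equalityI subsetI)
  fix z assume "z \<in> L"
  then obtain m n :: int where "z = of_int m * w1 + of_int n * w2" by (auto simp: in_L_iff)
  thus "z \<in> range (\<lambda>(m::int, n::int). of_int m * w1 + of_int n * w2)"
    by (intro image_eqI[of _ _ "(m, n)"]) auto
qed (auto simp: in_L_iff)

lemma countable_L: "countable L"
  by (subst L_range) simp

lemma half_w1: "w1 / 2 \<notin> L"
proof
  assume "w1 / 2 \<in> L"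
  then obtain m n :: int where e: "w1 / 2 = of_int m * w1 + of_int n * w2" by (auto simp: in_L_iff)
  have "of_real (of_int m - 1/2) * w1 + of_real (of_int n) * w2 = 0"
    using e by (simp add: algebra_simps)
  hence "real_of_int m - 1/2 = 0" using indep by blast
  hence "2 * real_of_int m = 1" by simp
  hence "2 * m = 1" by linarith
  thus False by presburger
qed

lemma half_w2: "w2 / 2 \<notin> L"
proof
  assume "w2 / 2 \<in> L"
  then obtain m n :: int where e: "w2 / 2 = of_int m * w1 + of_int n * w2" by (auto simp: in_L_iff)
  have "of_real (of_int m) * w1 + of_real (of_int n - 1/2) * w2 = 0"
    using e by (simp add: algebra_simps)
  hence "real_of_int n - 1/2 = 0" using indep by blast
  hence "2 * real_of_int n = 1" by simp
  hence "2 * n = 1" by linarith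
  thus False by presburger
qed

lemma finite_L_cball: "finite (L \<inter> cball 0 R)"
proof -
  define N where "N = \<lceil>R / c0\<rceil>"
  have "L \<inter> cball 0 R \<subseteq> (\<lambda>(m, n). of_int m * w1 + of_int n * w2) ` ({-N..N} \<times> {-N..N})"
  proof
    fix z assume z: "z \<in> L \<inter> cball 0 R"
    then obtain m n :: int where e: "z = of_int m * w1 + of_int n * w2" by (auto simp: in_L_iff)
    have "c0 * real_of_int (\<bar>m\<bar> + \<bar>n\<bar>) \<le> R" using c0_int[of m n] e z by auto
    hence "real_of_int (\<bar>m\<bar> + \<bar>n\<bar>) \<le> R / c0" using c0(1) by (simp add: field_simps)
    hence "real_of_int (\<bar>m\<bar> + \<bar>n\<bar>) \<le> real_of_int N" unfolding N_def by linarith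
    hence "\<bar>m\<bar> + \<bar>n\<bar> \<le> N" by linarith
    hence "(m, n) \<in> {-N..N} \<times> {-N..N}" by auto
    thus "z \<in> (\<lambda>(m, n). of_int m * w1 + of_int n * w2) ` ({-N..N} \<times> {-N..N})" using e by force
  qed
  thus ?thesis by (rule finite_subset) auto
qed

lemma inj_coords: "inj (\<lambda>(m::int, n::int). of_int m * w1 + of_int n * w2)"
proof (rule injI, clarsimp)
  fix m n m' n' :: int
  assume "of_int m * w1 + of_int n * w2 = of_int m' * w1 + of_int n' * w2"
  hence "of_real (of_int m - of_int m') * w1 + of_real (of_int n - of_int n') * w2 = 0"
    by (simp add: algebra_simps)
  from indep[OF this] show "m = m' \<and> n = n'" by simp
qed

lemma summable_L3: "(\<lambda>\<omega>. 1 / norm \<omega> ^ 3) summable_on (L - {0})"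
proof (rule nonneg_bdd_above_summable_on)
  show "bdd_above (sum (\<lambda>\<omega>. 1 / norm \<omega> ^ 3) ` {F. F \<subseteq> L - {0} \<and> finite F})"
  proof (rule bdd_aboveI, clarsimp)
    fix F assume F: "F \<subseteq> L - {0}" "finite F"
    define h where "h = (\<lambda>(m::int, n::int). of_int m * w1 + of_int n * w2)"
    define G where "G = h -` F"
    have fin: "finite G" unfolding G_def h_def using F inj_coords by (intro finite_vimageI) auto
    have FG: "F = h ` G" unfolding G_def using F L_range unfolding h_def by auto
    have G0: "(0, 0) \<notin> G" using F unfolding G_def h_def by auto
    have "sum (\<lambda>\<omega>. 1 / norm \<omega> ^ 3) F = (\<Sum>p\<in>G. 1 / norm (h p) ^ 3)"
      unfolding FG using inj_coords unfolding h_def by (subst sum.reindex) (auto intro: inj_on_subset)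
    also have "\<dots> \<le> (\<Sum>p\<in>G. fZ p / c0 ^ 3)"
    proof (intro sum_mono)
      fix p assume p: "p \<in> G"
      obtain m n where pmn: "p = (m, n)" by (cases p)
      have pos: "real_of_int (\<bar>m\<bar> + \<bar>n\<bar>) > 0" using G0 p pmn by (cases "m = 0") auto
      have "c0 * real_of_int (\<bar>m\<bar> + \<bar>n\<bar>) \<le> norm (h p)" using c0_int[of m n] pmn h_def by simp
      hence "(c0 * real_of_int (\<bar>m\<bar> + \<bar>n\<bar>)) ^ 3 \<le> norm (h p) ^ 3"
        using c0(1) pos by (intro power_mono) auto
      moreover have q1: "(c0 * real_of_int (\<bar>m\<bar> + \<bar>n\<bar>)) > 0" using c0(1) pos by simp
      moreover have "norm (h p) > 0" using q1 \<open>c0 * real_of_int (\<bar>m\<bar> + \<bar>n\<bar>) \<le> norm (h p)\<close> by linarith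
      ultimately have "1 / norm (h p) ^ 3 \<le> 1 / (c0 * real_of_int (\<bar>m\<bar> + \<bar>n\<bar>)) ^ 3"
        using c0(1) pos by (intro divide_left_mono mult_pos_pos zero_less_power) auto
      thus "1 / norm (h p) ^ 3 \<le> fZ p / c0 ^ 3" by (simp add: fZ_def pmn power_mult_distrib mult.commute)
    qed
    also have "\<dots> = sum fZ G / c0 ^ 3" by (simp add: sum_divide_distrib)
    also have "\<dots> \<le> 12 / c0 ^ 3" using fZ_finite_sum_bound[OF fin G0] c0(1) by (intro divide_right_mono) auto
    finally show "sum (\<lambda>\<omega>. 1 / norm \<omega> ^ 3) F \<le> 12 / c0 ^ 3" .
  qed
qed auto

lemma infinite_L0: "infinite (L - {0})"
proof -
  have nz: "of_nat (Suc n) * w1 \<noteq> 0" for n using w1_nz by (simp del: of_nat_Suc)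
  have inl: "of_nat (Suc n) * w1 \<in> L" for n using L_int_mult[of w1 "int (Suc n)"] by simp
  have "inj (\<lambda>n::nat. of_nat (Suc n) * w1)" using w1_nz by (auto intro!: injI)
  hence "infinite (range (\<lambda>n::nat. of_nat (Suc n) * w1))" by (rule range_inj_infinite)
  moreover have "range (\<lambda>n::nat. of_nat (Suc n) * w1) \<subseteq> L - {0}"
    using nz inl by auto
  ultimately show ?thesis using infinite_super by blast
qed

abbreviation a where "a \<equiv> lattice_enum w1 w2"

lemma a_bij: "bij_betw a UNIV (L - {0})"
proof -
  have "\<exists>f. bij_betw f (UNIV :: nat set) (L - {0})"
    using bij_betw_from_nat_into[of "L - {0}"] countable_L infinite_L0 by auto
  from someI_ex[OF this] show ?thesis by (simp add: lattice_enum_def)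
qed

lemma a_in: "a n \<in> L" "a n \<noteq> 0"
  using a_bij by (auto simp: bij_betw_def)

lemma a_inj: "inj a"
  using a_bij by (auto simp: bij_betw_def)

lemma range_a: "range a = L - {0}"
  using a_bij by (auto simp: bij_betw_def)

lemma summable_a3: "summable (\<lambda>n. 1 / norm (a n) ^ 3)"
proof -
  have "(\<lambda>n. 1 / norm (a n) ^ 3) summable_on UNIV"
    using summable_on_reindex_bij_betw[OF a_bij, of "\<lambda>\<omega>. 1 / norm \<omega> ^ 3"] summable_L3 by simp
  thus ?thesis by (subst (asm) summable_on_UNIV_nonneg_real_iff) auto
qed

lemma a_tendsto: "filterlim a at_infinity at_top"
  unfolding filterlim_at_infinity_conv_norm_at_top filterlim_at_top
proof
  fix Z :: real
  have "{n. \<not> Z \<le> norm (a n)} \<subseteq> a -` (L \<inter> cball 0 Z)" using a_in by auto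
  moreover have "finite (a -` (L \<inter> cball 0 Z))" using a_inj finite_L_cball by (intro finite_vimageI) auto
  ultimately have "finite {n. \<not> Z \<le> norm (a n)}" by (rule finite_subset)
  thus "eventually (\<lambda>n. Z \<le> norm (a n)) at_top"
    by (simp add: cofinite_eq_sequentially[symmetric] eventually_cofinite)
qed

sublocale W: weierstrass_product a "\<lambda>_. 2"
proof
  show "a n \<noteq> 0" for n by (rule a_in)
  show "filterlim a at_infinity at_top" by (rule a_tendsto)
  show "summable (\<lambda>n. (r / norm (a n)) ^ Suc 2)" if "r > 0" for r
  proof -
    have "summable (\<lambda>n. r ^ 3 * (1 / norm (a n) ^ 3))" by (intro summable_mult summable_a3)
    thus ?thesis by (simp add: power_divide)
  qed
qed

end

lemma series_local:
  fixes g :: "nat \<Rightarrow> complex \<Rightarrow> complex"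
  assumes holo: "\<And>n. g n holomorphic_on ball z0 r"
    and bound: "eventually (\<lambda>n. \<forall>z\<in>ball z0 r. norm (g n z) \<le> M n) sequentially"
    and M: "summable M" and r: "r > 0"
  shows "(\<lambda>z. \<Sum>n. g n z) holomorphic_on ball z0 r"
    and "(\<lambda>n. deriv (g n) z0) sums deriv (\<lambda>z. \<Sum>n. g n z) z0"
proof -
  have ulim: "uniform_limit (ball z0 r) (\<lambda>N z. \<Sum>i<N. g i z) (\<lambda>z. \<Sum>n. g n z) sequentially"
    by (rule Weierstrass_m_test_ev[OF bound M])
  show holG: "(\<lambda>z. \<Sum>n. g n z) holomorphic_on ball z0 r"
  proof (rule holomorphic_uniform_sequence[of _ "\<lambda>N z. \<Sum>i<N. g i z"])
    show "(\<lambda>z. \<Sum>i<N. g i z) holomorphic_on ball z0 r" for N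
      by (intro holomorphic_intros holo)
    fix x assume x: "x \<in> ball z0 r"
    then obtain d where d: "d > 0" "cball x d \<subseteq> ball z0 r"
      using open_ball openE by (meson open_contains_cball)
    thus "\<exists>d>0. cball x d \<subseteq> ball z0 r \<and> uniform_limit (cball x d) (\<lambda>N z. \<Sum>i<N. g i z) (\<lambda>z. \<Sum>n. g n z) sequentially"
      using uniform_limit_on_subset[OF ulim d(2)] by blast
  qed auto
  have "(\<lambda>N. deriv (\<lambda>z. \<Sum>i<N. g i z) z0) \<longlonglongrightarrow> deriv (\<lambda>z. \<Sum>n. g n z) z0"
    by (rule deriv_complex_uniform_limit[OF ulim])
       (use r in \<open>auto intro!: always_eventually holomorphic_intros holo\<close>)
  moreover have "deriv (\<lambda>z. \<Sum>i<N. g i z) z0 = (\<Sum>i<N. deriv (g i) z0)" for N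
  proof (rule deriv_sum)
    fix i show "g i field_differentiable at z0"
      using holo[of i] r by (meson centre_in_ball holomorphic_on_imp_differentiable_at open_ball)
  qed
  ultimately show "(\<lambda>n. deriv (g n) z0) sums deriv (\<lambda>z. \<Sum>n. g n z) z0"
    unfolding sums_def by simp
qed

lemma bound_aux1:
  fixes z a :: complex
  assumes "norm a \<ge> 2 * norm z"
  shows "norm (z - a) \<ge> norm a / 2"
proof -
  have "norm a - norm z \<le> norm (a - z)" by (rule norm_triangle_ineq2)
  hence "norm a \<le> norm (z - a) + norm z" by (simp add: norm_minus_commute)
  thus ?thesis using assms by linarith
qed

lemma bound_T:
  fixes z a :: complex
  assumes "norm a \<ge> 2 * norm z" "a \<noteq> 0"
  shows "norm (1 / (z - a)^2 - 1 / a^2) \<le> 12 * norm z / norm a ^ 3"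
proof -
  have za: "z \<noteq> a"
  proof
    assume "z = a" hence "norm a \<le> 0" using assms(1) by simp
    thus False using assms(2) by simp
  qed
  have eq: "1 / (z - a)^2 - 1 / a^2 = z * (2 * a - z) / ((z - a)^2 * a^2)"
    using za assms(2) by (simp add: divide_simps) (simp add: power2_eq_square algebra_simps)
  have n1: "norm (z - a) \<ge> norm a / 2" by (rule bound_aux1[OF assms(1)])
  have n2: "norm (2 * a - z) \<le> 3 * norm a"
  proof -
    have "norm (2 * a - z) \<le> norm (2 * a) + norm z" by (rule norm_triangle_ineq4)
    moreover have "norm z \<ge> 0" by simp
    moreover have "norm (2 * a) = 2 * norm a" by (simp add: norm_mult)
    ultimately show ?thesis using assms(1) by linarith
  qed
  have pa: "norm a > 0" using assms by simp
  have "norm (1 / (z - a)^2 - 1 / a^2) = norm z * norm (2 * a - z) / (norm (z - a)^2 * norm a^2)"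
    unfolding eq by (simp add: norm_mult norm_divide norm_power)
  also have "\<dots> \<le> norm z * (3 * norm a) / ((norm a / 2)^2 * norm a^2)"
    using n1 n2 pa
    by (intro frac_le mult_left_mono mult_right_mono power_mono mult_pos_pos) auto
  also have "\<dots> = 12 * norm z / norm a ^ 3"
    using pa by (simp add: field_simps power2_eq_square power3_eq_cube)
  finally show ?thesis .
qed

lemma bound_Y:
  fixes z a :: complex
  assumes "norm a \<ge> 2 * norm z" "a \<noteq> 0"
  shows "norm (1 / (z - a)^3) \<le> 8 / norm a ^ 3"
proof -
  have n1: "norm (z - a) \<ge> norm a / 2" by (rule bound_aux1[OF assms(1)])
  have pa: "norm a > 0" using assms by simp
  have "norm (1 / (z - a)^3) = 1 / norm (z - a) ^ 3" by (simp add: norm_divide norm_power)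
  also have "\<dots> \<le> 1 / (norm a / 2) ^ 3"
    using n1 pa by (intro divide_left_mono power_mono mult_pos_pos zero_less_power) auto
  also have "\<dots> = 8 / norm a ^ 3" by (simp add: field_simps)
  finally show ?thesis .
qed

lemma bound_Z:
  fixes z a :: complex
  assumes "norm a \<ge> 2 * norm z" "a \<noteq> 0"
  shows "norm (z^2 / (a^2 * (z - a))) \<le> 2 * norm z ^ 2 / norm a ^ 3"
proof -
  have n1: "norm (z - a) \<ge> norm a / 2" by (rule bound_aux1[OF assms(1)])
  have pa: "norm a > 0" using assms by simp
  have "norm (z^2 / (a^2 * (z - a))) = norm z ^ 2 / (norm a ^ 2 * norm (z - a))"
    by (simp add: norm_divide norm_power norm_mult)
  also have "\<dots> \<le> norm z ^ 2 / (norm a ^ 2 * (norm a / 2))"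
    using n1 pa by (intro divide_left_mono mult_left_mono mult_pos_pos) auto
  also have "\<dots> = 2 * norm z ^ 2 / norm a ^ 3" by (simp add: field_simps power2_eq_square power3_eq_cube)
  finally show ?thesis .
qed

context ell
begin

definition T where "T z = (\<Sum>n. 1 / (z - a n)^2 - 1 / (a n)^2)"
definition Y where "Y z = (\<Sum>n. 1 / (z - a n)^3)"
definition Zs where "Zs z = (\<Sum>n. z^2 / ((a n)^2 * (z - a n)))"

abbreviation U0 where "U0 \<equiv> -(L - {0})"

lemma closed_L0: "closed (L - {0})"
  using not_islimpt_L closed_limpt islimpt_subset[of _ "L - {0}" L] by blast

lemma open_U0: "open U0"
  using closed_L0 by (simp add: closed_def)

lemma U0_ne_a: "z \<in> U0 \<Longrightarrow> z \<noteq> a n"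
  using a_in[of n] by auto

lemma ev_big: "eventually (\<lambda>n. norm (a n) \<ge> R) sequentially"
  using a_tendsto unfolding filterlim_at_infinity_conv_norm_at_top filterlim_at_top by auto

lemma summable_K3: "summable (\<lambda>n. K / norm (a n) ^ 3)"
  using summable_mult[OF summable_a3, of K] by simp

lemma local_series:
  fixes g :: "nat \<Rightarrow> complex \<Rightarrow> complex"
  assumes z0: "z0 \<in> U0"
    and holo: "\<And>n. g n holomorphic_on U0"
    and bnd: "\<And>n z R. norm z \<le> R \<Longrightarrow> norm (a n) \<ge> 2 * R \<Longrightarrow> norm (g n z) \<le> K R / norm (a n) ^ 3"
  shows "\<exists>r>0. ball z0 r \<subseteq> U0 \<and> (\<lambda>z. \<Sum>n. g n z) holomorphic_on ball z0 r \<and>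
           (\<lambda>n. deriv (g n) z0) sums deriv (\<lambda>z. \<Sum>n. g n z) z0"
proof -
  obtain r where r: "r > 0" "ball z0 r \<subseteq> U0" using open_U0 z0 openE by blast
  define R where "R = norm z0 + r"
  have ev: "eventually (\<lambda>n. \<forall>z\<in>ball z0 r. norm (g n z) \<le> K R / norm (a n) ^ 3) sequentially"
    using ev_big[of "2 * R"]
  proof eventually_elim
    case (elim n)
    show ?case
    proof
      fix z assume "z \<in> ball z0 r"
      hence "norm z \<le> R" unfolding R_def using norm_triangle_ineq2[of z z0]
        by (auto simp: dist_norm norm_minus_commute)
      thus "norm (g n z) \<le> K R / norm (a n) ^ 3" using bnd elim by blast
    qed
  qed
  have h: "\<And>n. g n holomorphic_on ball z0 r" using holo r(2) holomorphic_on_subset by blast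
  from series_local[OF h ev summable_K3 r(1)] r show ?thesis by blast
qed

lemma summable_pointwise:
  fixes g :: "nat \<Rightarrow> complex \<Rightarrow> complex"
  assumes bnd: "\<And>n z R. norm z \<le> R \<Longrightarrow> norm (a n) \<ge> 2 * R \<Longrightarrow> norm (g n z) \<le> K R / norm (a n) ^ 3"
  shows "summable (\<lambda>n. norm (g n z))"
proof (rule summable_comparison_test_ev[OF _ summable_K3[of "K (norm z)"]])
  show "eventually (\<lambda>n. norm (norm (g n z)) \<le> K (norm z) / norm (a n) ^ 3) sequentially"
    using ev_big[of "2 * norm z"] by eventually_elim (use bnd in auto)
qed

lemma bndT: "norm z \<le> R \<Longrightarrow> norm (a n) \<ge> 2 * R \<Longrightarrow>
    norm (1 / (z - a n)^2 - 1 / (a n)^2) \<le> (12 * R) / norm (a n) ^ 3"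
proof -
  assume "norm z \<le> R" "norm (a n) \<ge> 2 * R"
  hence "norm (1 / (z - a n)^2 - 1 / (a n)^2) \<le> 12 * norm z / norm (a n) ^ 3"
    by (intro bound_T) (use a_in in auto)
  also have "\<dots> \<le> 12 * R / norm (a n) ^ 3" using \<open>norm z \<le> R\<close> by (intro divide_right_mono) auto
  finally show ?thesis .
qed

lemma bndY: "norm z \<le> R \<Longrightarrow> norm (a n) \<ge> 2 * R \<Longrightarrow>
    norm (1 / (z - a n)^3) \<le> (\<lambda>_. 8) R / norm (a n) ^ 3"
  using bound_Y[of z "a n"] a_in[of n] by simp

lemma bndZ: "norm z \<le> R \<Longrightarrow> norm (a n) \<ge> 2 * R \<Longrightarrow>
    norm (z^2 / ((a n)^2 * (z - a n))) \<le> (2 * R^2) / norm (a n) ^ 3"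
proof -
  assume "norm z \<le> R" "norm (a n) \<ge> 2 * R"
  hence "norm (z^2 / ((a n)^2 * (z - a n))) \<le> 2 * norm z ^ 2 / norm (a n) ^ 3"
    by (intro bound_Z) (use a_in in auto)
  also have "\<dots> \<le> 2 * R^2 / norm (a n) ^ 3" using \<open>norm z \<le> R\<close>
    by (intro divide_right_mono mult_left_mono power_mono) auto
  finally show ?thesis .
qed

lemma holoT_n: "(\<lambda>z. 1 / (z - a n)^2 - 1 / (a n)^2) holomorphic_on U0"
  using a_in[of n] by (intro holomorphic_intros) auto

lemma holoY_n: "(\<lambda>z. 1 / (z - a n)^3) holomorphic_on U0"
  using a_in[of n] by (intro holomorphic_intros) auto

lemma holoZ_n: "(\<lambda>z. z^2 / ((a n)^2 * (z - a n))) holomorphic_on U0"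
  using a_in[of n] using a_in[of n] by (intro holomorphic_intros) auto

lemma summable_T: "summable (\<lambda>n. norm (1 / (z - a n)^2 - 1 / (a n)^2))"
  by (rule summable_pointwise[where K="\<lambda>R. 12 * R", OF bndT])

lemma summable_Y: "summable (\<lambda>n. norm (1 / (z - a n)^3))"
  by (rule summable_pointwise[where K="\<lambda>_. 8", OF bndY])

lemma summable_Z: "summable (\<lambda>n. norm (z^2 / ((a n)^2 * (z - a n))))"
  by (rule summable_pointwise[where K="\<lambda>R. 2 * R^2", OF bndZ])

lemma holo_T: "T holomorphic_on U0"
proof -
  have "T analytic_on U0" unfolding analytic_on_def
  proof
    fix z0 assume "z0 \<in> U0"
    from local_series[where K="\<lambda>R. 12 * R", OF this holoT_n bndT] show "\<exists>e>0. T holomorphic_on ball z0 e"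
      unfolding T_def[abs_def] by blast
  qed
  thus ?thesis by (rule analytic_imp_holomorphic)
qed

lemma holo_Zs: "Zs holomorphic_on U0"
proof -
  have "Zs analytic_on U0" unfolding analytic_on_def
  proof
    fix z0 assume "z0 \<in> U0"
    from local_series[where K="\<lambda>R. 2 * R^2", OF this holoZ_n bndZ] show "\<exists>e>0. Zs holomorphic_on ball z0 e"
      unfolding Zs_def[abs_def] by blast
  qed
  thus ?thesis by (rule analytic_imp_holomorphic)
qed

lemma deriv_T: "z \<in> U0 \<Longrightarrow> deriv T z = -2 * Y z"
proof -
  assume z: "z \<in> U0"
  from local_series[where K="\<lambda>R. 12 * R", OF z holoT_n bndT]
  have s: "(\<lambda>n. deriv (\<lambda>z. 1 / (z - a n)^2 - 1 / (a n)^2) z) sums deriv T z"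
    unfolding T_def[abs_def] by blast
  have "deriv (\<lambda>z. 1 / (z - a n)^2 - 1 / (a n)^2) z = -2 * (1 / (z - a n)^3)" for n
  proof (rule DERIV_imp_deriv)
    have "z - a n \<noteq> 0" using U0_ne_a[OF z] by simp
    thus "((\<lambda>z. 1 / (z - a n)^2 - 1 / (a n)^2) has_field_derivative -2 * (1 / (z - a n)^3)) (at z)"
      apply -
      apply (rule derivative_eq_intros refl | simp)+
      apply (simp add: divide_simps)
      apply (simp add: eval_nat_numeral algebra_simps)
      done
  qed
  with s have "(\<lambda>n. -2 * (1 / (z - a n)^3)) sums deriv T z" by simp
  moreover have "(\<lambda>n. -2 * (1 / (z - a n)^3)) sums (-2 * Y z)"
    unfolding Y_def by (intro sums_mult summable_sums summable_norm_cancel[OF summable_Y])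
  ultimately show ?thesis using sums_unique2 by blast
qed

lemma deriv_Zs: "z \<in> U0 \<Longrightarrow> deriv Zs z = - T z"
proof -
  assume z: "z \<in> U0"
  from local_series[where K="\<lambda>R. 2 * R^2", OF z holoZ_n bndZ]
  have s: "(\<lambda>n. deriv (\<lambda>z. z^2 / ((a n)^2 * (z - a n))) z) sums deriv Zs z"
    unfolding Zs_def[abs_def] by blast
  have "deriv (\<lambda>z. z^2 / ((a n)^2 * (z - a n))) z = - (1 / (z - a n)^2 - 1 / (a n)^2)" for n
  proof (rule DERIV_imp_deriv)
    have "z - a n \<noteq> 0" using U0_ne_a[OF z] by simp
    moreover have "a n \<noteq> 0" by (rule a_in)
    ultimately show "((\<lambda>z. z^2 / ((a n)^2 * (z - a n))) has_field_derivative - (1 / (z - a n)^2 - 1 / (a n)^2)) (at z)"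
      apply -
      apply (rule derivative_eq_intros refl | simp)+
      apply (simp add: divide_simps)
      apply (simp add: power2_eq_square power3_eq_cube algebra_simps)
      done
  qed
  with s have "(\<lambda>n. - (1 / (z - a n)^2 - 1 / (a n)^2)) sums deriv Zs z" by simp
  moreover have "(\<lambda>n. - (1 / (z - a n)^2 - 1 / (a n)^2)) sums (- T z)"
    unfolding T_def by (intro sums_minus summable_sums summable_norm_cancel[OF summable_T])
  ultimately show ?thesis using sums_unique2 by blast
qed

lemma infsum_L0:
  fixes f :: "complex \<Rightarrow> complex"
  assumes "summable (\<lambda>n. norm (f (a n)))"
  shows "infsum f (L - {0}) = (\<Sum>n. f (a n))" "f summable_on (L - {0})"
proof -
  have "((\<lambda>n. f (a n)) has_sum (\<Sum>n. f (a n))) UNIV"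
    using norm_summable_imp_has_sum[OF assms summable_sums[OF summable_norm_cancel[OF assms]]] .
  thus "infsum f (L - {0}) = (\<Sum>n. f (a n))"
    using infsum_reindex_bij_betw[OF a_bij, of f] by (simp add: infsumI)
  have "(\<lambda>n. f (a n)) summable_on UNIV" by (rule norm_summable_imp_summable_on[OF assms])
  thus "f summable_on (L - {0})" using summable_on_reindex_bij_betw[OF a_bij, of f] by simp
qed

lemma wp_eq: "wp w1 w2 z = 1 / z^2 + T z"
  unfolding wp_def T_def using infsum_L0(1)[OF summable_T[of z]] by simp

lemma P3_eq: "infsum (\<lambda>\<omega>. 1 / (z - \<omega>)^3) L = 1 / z^3 + Y z"
proof -
  have "L = insert 0 (L - {0})" by auto
  hence "infsum (\<lambda>\<omega>. 1 / (z - \<omega>)^3) L = infsum (\<lambda>\<omega>. 1 / (z - \<omega>)^3) (insert 0 (L - {0}))" by simp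
  also have "\<dots> = 1 / z^3 + infsum (\<lambda>\<omega>. 1 / (z - \<omega>)^3) (L - {0})"
    by (subst infsum_insert) (use infsum_L0(2)[OF summable_Y[of z]] in auto)
  also have "infsum (\<lambda>\<omega>. 1 / (z - \<omega>)^3) (L - {0}) = Y z"
    unfolding Y_def using infsum_L0(1)[OF summable_Y[of z]] by simp
  finally show ?thesis .
qed

lemma P3_periodic: "w \<in> L \<Longrightarrow> infsum (\<lambda>\<omega>. 1 / (z + w - \<omega>)^3) L = infsum (\<lambda>\<omega>. 1 / (z - \<omega>)^3) L"
proof -
  assume w: "w \<in> L"
  have bij: "bij_betw (\<lambda>\<omega>. \<omega> + w) L L"
    by (rule bij_betwI[of _ _ _ "\<lambda>\<omega>. \<omega> - w"]) (use w L_add L_diff in auto)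
  have "infsum (\<lambda>\<omega>. 1 / (z + w - \<omega>)^3) L = infsum (\<lambda>\<omega>. 1 / (z + w - (\<omega> + w))^3) L"
    using infsum_reindex_bij_betw[OF bij, of "\<lambda>\<omega>. 1 / (z + w - \<omega>)^3"] by simp
  thus ?thesis by simp
qed

lemma wp_even: "wp w1 w2 (-z) = wp w1 w2 z"
proof -
  have bij: "bij_betw uminus (L - {0}) (L - {0})"
    by (rule bij_betwI[of _ _ _ uminus]) auto
  have "infsum (\<lambda>w. 1 / (-z - w)^2 - 1 / w^2) (L - {0}) = infsum (\<lambda>w. 1 / (-z - (-w))^2 - 1 / (-w)^2) (L - {0})"
    using infsum_reindex_bij_betw[OF bij, of "\<lambda>w. 1 / (-z - w)^2 - 1 / w^2"] by simp
  also have "(\<lambda>w. 1 / (-z - (-w))^2 - 1 / (-w)^2) = (\<lambda>w. 1 / (z - w)^2 - 1 / w^2)"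
    by (auto simp: power2_eq_square algebra_simps)
  finally show ?thesis unfolding wp_def by (simp add: power2_eq_square)
qed

end

lemma wf2: "weierstrass_factor 2 t = (1 - t) * exp (t + t^2/2)"
  by (simp add: weierstrass_factor_def numeral_2_eq_2)

lemma E2_eq: "weierstrass_E2 = weierstrass_factor 2"
  by (auto simp: wf2 weierstrass_E2_def fun_eq_iff)

lemma wf2_deriv: "(z::complex) \<noteq> b \<Longrightarrow> b \<noteq> 0 \<Longrightarrow>
  ((\<lambda>z. weierstrass_factor 2 (z / b)) has_field_derivative weierstrass_factor 2 (z / b) * (z^2 / (b^2 * (z - b)))) (at z)"
  unfolding wf2
  apply (rule derivative_eq_intros refl | simp)+
  apply (simp add: divide_simps)
  apply (simp add: eval_nat_numeral algebra_simps)
  done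

lemma translate_nat:
  fixes f :: "complex \<Rightarrow> 'b"
  assumes "\<And>z. f (z + w) = f z"
  shows "f (z + of_nat n * w) = f z"
proof (induction n arbitrary: z)
  case 0 thus ?case by simp
next
  case (Suc n)
  have "f (z + of_nat (Suc n) * w) = f ((z + of_nat n * w) + w)" by (simp add: algebra_simps)
  also have "\<dots> = f (z + of_nat n * w)" by (rule assms)
  finally show ?case using Suc by simp
qed

lemma translate_int:
  fixes f :: "complex \<Rightarrow> 'b"
  assumes "\<And>z. f (z + w) = f z"
  shows "f (z + of_int m * w) = f z"
proof (cases m rule: int_cases2)
  case (nonneg n) thus ?thesis using translate_nat[where f=f and w=w, OF assms] by simp
next
  case (nonpos n)
  have "f (z + of_int m * w) = f ((z + of_int m * w) + of_nat n * w)"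
    using translate_nat[where f=f and w=w, OF assms, of "z + of_int m * w" n] by simp
  also have "\<dots> = f z" using nonpos by simp
  finally show ?thesis .
qed

context ell
begin

lemma periodic_all:
  fixes f :: "complex \<Rightarrow> 'b"
  assumes "\<And>z. f (z + w1) = f z" "\<And>z. f (z + w2) = f z" "\<omega> \<in> L"
  shows "f (z + \<omega>) = f z"
proof -
  obtain m n :: int where \<omega>: "\<omega> = of_int m * w1 + of_int n * w2" using assms(3) by (auto simp: in_L_iff)
  have "f (z + \<omega>) = f ((z + of_int m * w1) + of_int n * w2)" by (simp add: \<omega> add.assoc)
  also have "\<dots> = f (z + of_int m * w1)" by (rule translate_int[where f=f, OF assms(2)])
  also have "\<dots> = f z" by (rule translate_int[where f=f, OF assms(1)])
  finally show ?thesis .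
qed

lemma periodic_offL:
  fixes f :: "complex \<Rightarrow> complex"
  assumes "\<And>z. z \<notin> L \<Longrightarrow> f (z + w1) = f z" "\<And>z. z \<notin> L \<Longrightarrow> f (z + w2) = f z" "\<omega> \<in> L" "z \<notin> L"
  shows "f (z + \<omega>) = f z"
proof -
  define g where "g z = (if z \<in> L then 0 else f z)" for z
  have "g (z + w1) = g z" for z using assms(1)[of z] L_add_iff[OF L_w1, of z] by (auto simp: g_def)
  moreover have "g (z + w2) = g z" for z using assms(2)[of z] L_add_iff[OF L_w2, of z] by (auto simp: g_def)
  ultimately have "g (z + \<omega>) = g z" using periodic_all[of g, OF _ _ assms(3)] by blast
  thus ?thesis using assms(4) L_add_iff[OF assms(3), of z] by (auto simp: g_def)
qed


abbreviation P where "P \<equiv> wp w1 w2"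

lemma compl_L_sub_U0: "-L \<subseteq> U0" by auto

lemma holo_P: "P holomorphic_on -L"
proof -
  have "(\<lambda>z. 1 / z^2 + T z) holomorphic_on -L"
    by (intro holomorphic_intros holomorphic_on_subset[OF holo_T compl_L_sub_U0]) auto
  thus ?thesis by (simp add: wp_eq[abs_def])
qed

lemma open_compl_L': "open (-L)" by (rule open_compl_L)

lemma deriv_P: "z \<notin> L \<Longrightarrow> deriv P z = -2 / z^3 - 2 * Y z"
proof -
  assume z: "z \<notin> L"
  hence z0: "z \<noteq> 0" by auto
  have "(T has_field_derivative deriv T z) (at z)"
    using holo_T open_U0 z by (intro holomorphic_derivI) auto
  hence "((\<lambda>z. 1 / z^2 + T z) has_field_derivative (-2 / z^3 - 2 * Y z)) (at z)"
    using z0 deriv_T[of z] z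
    apply -
    apply (rule derivative_eq_intros refl | simp)+
    apply (simp add: divide_simps)
    apply (simp add: eval_nat_numeral algebra_simps)
    done
  thus ?thesis by (simp add: wp_eq[abs_def] DERIV_imp_deriv)
qed

lemma P_deriv_at: "z \<notin> L \<Longrightarrow> (P has_field_derivative wp' w1 w2 z) (at z)"
  unfolding wp'_def using holo_P open_compl_L by (intro holomorphic_derivI) auto

lemma wp'_eq: "z \<notin> L \<Longrightarrow> wp' w1 w2 z = -2 * infsum (\<lambda>\<omega>. 1 / (z - \<omega>)^3) L"
  unfolding wp'_def by (simp add: deriv_P P3_eq algebra_simps)

lemma wp'_periodic: "z \<notin> L \<Longrightarrow> w \<in> L \<Longrightarrow> wp' w1 w2 (z + w) = wp' w1 w2 z"
  using L_add_iff[of w z] by (simp add: wp'_eq P3_periodic)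

lemma connected_compl_L: "connected (-L)"
  using path_connected_complement_countable[of L] countable_L
  by (simp add: path_connected_imp_connected)

lemma P_periodic_gen:
  assumes w: "w \<in> L" "w / 2 \<notin> L"
  shows "z \<notin> L \<Longrightarrow> P (z + w) = P z"
proof -
  define D where "D z = P (z + w) - P z" for z
  have cont: "continuous_on (-L) D"
  proof -
    have "(\<lambda>z. z + w) ` (-L) \<subseteq> -L" using L_add_iff[OF w(1)] by auto
    hence "(\<lambda>z. P (z + w)) holomorphic_on -L"
      by (intro holomorphic_on_compose_gen[OF _ holo_P, unfolded o_def]) (auto intro: holomorphic_intros)
    thus ?thesis unfolding D_def by (intro holomorphic_on_imp_continuous_on holomorphic_intros holo_P)
  qed
  have "\<forall>x\<in>-L - {}. (D has_field_derivative 0) (at x)"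
  proof
    fix x assume "x \<in> -L - {}"
    hence x: "x \<notin> L" "x + w \<notin> L" using L_add_iff[OF w(1)] by auto
    have d1: "((\<lambda>z. P (z + w)) has_field_derivative (wp' w1 w2 (x + w) * 1)) (at x)"
      by (rule DERIV_chain2[where g="\<lambda>z. z + w", OF P_deriv_at[OF x(2)]]) (auto intro!: derivative_eq_intros)
    have "(D has_field_derivative (wp' w1 w2 (x + w) * 1 - wp' w1 w2 x)) (at x)"
      unfolding D_def[abs_def] by (rule DERIV_diff[OF d1 P_deriv_at[OF x(1)]])
    thus "(D has_field_derivative 0) (at x)" using wp'_periodic[OF x(1) w(1)] by simp
  qed
  then obtain c where c: "\<And>x. x \<in> -L \<Longrightarrow> D x = c"
    using DERIV_zero_connected_constant[OF connected_compl_L open_compl_L finite.emptyI cont] by blast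
  have "-w/2 \<notin> L" using w(2) L_uminus_iff[of "w/2"] by simp
  hence "c = D (-w/2)" using c by auto
  also have "\<dots> = P (w/2) - P (-(w/2))" by (simp add: D_def)
  also have "\<dots> = 0" by (simp add: wp_even)
  finally show "z \<notin> L \<Longrightarrow> P (z + w) = P z" using c[of z] by (simp add: D_def)
qed

lemma P_periodic: "z \<notin> L \<Longrightarrow> \<omega> \<in> L \<Longrightarrow> P (z + \<omega>) = P z"
  by (rule periodic_offL[OF P_periodic_gen[OF L_w1 half_w1] P_periodic_gen[OF L_w2 half_w2]])

definition zeta where "zeta z = 1 / z + Zs z"

lemma holo_zeta: "zeta holomorphic_on -L"
  unfolding zeta_def[abs_def]
  by (intro holomorphic_intros holomorphic_on_subset[OF holo_Zs compl_L_sub_U0]) auto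

lemma zeta_deriv: "z \<notin> L \<Longrightarrow> (zeta has_field_derivative - P z) (at z)"
proof -
  assume z: "z \<notin> L"
  hence z0: "z \<noteq> 0" by auto
  have "(Zs has_field_derivative deriv Zs z) (at z)"
    using holo_Zs open_U0 z by (intro holomorphic_derivI) auto
  hence "((\<lambda>z. 1 / z + Zs z) has_field_derivative (-1 / z^2 - T z)) (at z)"
    using z0 deriv_Zs[of z] z
    apply -
    apply (rule derivative_eq_intros refl | simp)+
    apply (simp add: divide_simps power2_eq_square)
    done
  thus ?thesis unfolding zeta_def[abs_def] by (simp add: wp_eq)
qed

abbreviation \<sigma> where "\<sigma> \<equiv> wsigma w1 w2"

lemma sigma_eq: "\<sigma> z = z * W.f z"
  unfolding wsigma_def W.f_def E2_eq by simp

lemma holo_Wf: "W.f holomorphic_on A"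
  by (rule W.holomorphic)

lemma holo_sigma: "\<sigma> holomorphic_on A"
  unfolding sigma_eq[abs_def] by (intro holomorphic_intros holo_Wf)

lemma Wf_zero: "W.f z = 0 \<longleftrightarrow> z \<in> L - {0}"
  using W.zero[of z] range_a by simp

lemma sigma_zero: "\<sigma> z = 0 \<longleftrightarrow> z \<in> L"
  using Wf_zero[of z] by (auto simp: sigma_eq)

lemma Wf_0: "W.f 0 = 1"
  unfolding W.f_def by simp

lemma Wf_logderiv: "z \<in> U0 \<Longrightarrow> deriv W.f z = Zs z * W.f z"
proof -
  assume z: "z \<in> U0"
  define R where "R = norm z + 1"
  have R: "R > 0" by (simp add: R_def add_nonneg_pos)
  have ul: "uniform_limit (ball 0 R) (\<lambda>N x. \<Prod>k<N. weierstrass_factor 2 (x / a k)) W.f sequentially"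
    using uniform_limit_on_subset[OF W.uniform_limit[OF R]] by auto
  have nz: "W.f z \<noteq> 0" using Wf_zero[of z] z by auto
  have "(\<lambda>k. deriv (\<lambda>x. weierstrass_factor 2 (x / a k)) z / weierstrass_factor 2 (z / a k)) sums (deriv W.f z / W.f z)"
    by (rule logderiv_prodinf_complex_uniform_limit[OF ul _ nz])
       (auto simp: R_def intro!: holomorphic_intros)
  moreover have "deriv (\<lambda>x. weierstrass_factor 2 (x / a k)) z / weierstrass_factor 2 (z / a k) = z^2 / ((a k)^2 * (z - a k))" for k
  proof -
    have zk: "z \<noteq> a k" using U0_ne_a[OF z] .
    have "weierstrass_factor 2 (z / a k) \<noteq> 0" using zk a_in[of k] by simp
    thus ?thesis using DERIV_imp_deriv[OF wf2_deriv[OF zk a_in(2)]] by simp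
  qed
  ultimately have "(\<lambda>k. z^2 / ((a k)^2 * (z - a k))) sums (deriv W.f z / W.f z)" by simp
  hence "deriv W.f z / W.f z = Zs z" unfolding Zs_def by (simp add: sums_iff)
  thus ?thesis using nz by (simp add: field_simps)
qed

lemma Wf_deriv_at: "(W.f has_field_derivative deriv W.f z) (at z)"
  using holo_Wf[of UNIV] by (intro holomorphic_derivI) auto

lemma sigma_deriv_at: "(\<sigma> has_field_derivative deriv \<sigma> z) (at z)"
  using holo_sigma[of UNIV] by (intro holomorphic_derivI) auto

lemma sigma_logderiv: "z \<notin> L \<Longrightarrow> deriv \<sigma> z = zeta z * \<sigma> z"
proof -
  assume z: "z \<notin> L"
  hence z0: "z \<noteq> 0" by auto
  have "((\<lambda>z. z * W.f z) has_field_derivative (1 * W.f z + deriv W.f z * z)) (at z)"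
    by (rule DERIV_mult[OF DERIV_ident Wf_deriv_at])
  hence "((\<lambda>z. z * W.f z) has_field_derivative (W.f z + z * deriv W.f z)) (at z)"
    by (simp add: mult.commute)
  hence "deriv \<sigma> z = W.f z + z * deriv W.f z" unfolding sigma_eq[abs_def] by (rule DERIV_imp_deriv)
  also have "\<dots> = zeta z * \<sigma> z" using Wf_logderiv[of z] z z0
    by (simp add: zeta_def sigma_eq field_simps)
  finally show ?thesis .
qed

end

context ell
begin

lemma T_even: "T (-z) = T z"
  using wp_even[of z] wp_eq[of z] wp_eq[of "-z"] by simp

lemma countable_L0: "countable (L - {0})" using countable_L by auto

lemma connected_U0: "connected U0"
  using path_connected_complement_countable[of "L - {0}"] countable_L0
  by (simp add: path_connected_imp_connected)

lemma U0_uminus: "-z \<in> U0 \<longleftrightarrow> z \<in> U0" by auto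

lemma Zs_0: "Zs 0 = 0" by (simp add: Zs_def)

lemma Zs_deriv_at: "z \<in> U0 \<Longrightarrow> (Zs has_field_derivative - T z) (at z)"
  using holo_Zs open_U0 deriv_Zs[of z] by (metis holomorphic_derivI)

lemma Zs_odd: "z \<in> U0 \<Longrightarrow> Zs (-z) = - Zs z"
proof -
  define E where "E z = Zs z + Zs (-z)" for z
  have cont: "continuous_on U0 E"
  proof -
    have "(\<lambda>z. Zs (-z)) holomorphic_on U0"
      by (rule holomorphic_on_compose_gen[OF _ holo_Zs, unfolded o_def]) (auto intro: holomorphic_intros)
    thus ?thesis unfolding E_def by (intro holomorphic_on_imp_continuous_on holomorphic_intros holo_Zs)
  qed
  have "\<forall>x\<in>U0 - {}. (E has_field_derivative 0) (at x)"
  proof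
    fix x assume "x \<in> U0 - {}"
    hence x: "x \<in> U0" "-x \<in> U0" by auto
    have d1: "((\<lambda>z. Zs (-z)) has_field_derivative (- T (-x) * -1)) (at x)"
      by (rule DERIV_chain2[where g="\<lambda>z. -z", OF Zs_deriv_at[OF x(2)]]) (auto intro!: derivative_eq_intros)
    have "(E has_field_derivative (- T x + - T (-x) * -1)) (at x)"
      unfolding E_def[abs_def] by (rule DERIV_add[OF Zs_deriv_at[OF x(1)] d1])
    thus "(E has_field_derivative 0) (at x)" by (simp add: T_even)
  qed
  then obtain c where c: "\<And>x. x \<in> U0 \<Longrightarrow> E x = c"
    using DERIV_zero_connected_constant[OF connected_U0 open_U0 finite.emptyI cont] by blast
  have "c = E 0" using c[of 0] by simp
  also have "\<dots> = 0" by (simp add: E_def Zs_0)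
  finally show "z \<in> U0 \<Longrightarrow> Zs (-z) = - Zs z" using c[of z] by (simp add: E_def add_eq_0_iff)
qed

lemma Wf_deriv_at': "z \<in> U0 \<Longrightarrow> (W.f has_field_derivative Zs z * W.f z) (at z)"
  using Wf_deriv_at[of z] Wf_logderiv[of z] by simp

lemma Wf_even: "W.f (-z) = W.f z"
proof (cases "z \<in> U0")
  case False
  hence "z \<in> L - {0}" "-z \<in> L - {0}" by auto
  thus ?thesis using Wf_zero[of z] Wf_zero[of "-z"] by simp
next
  case True
  define R where "R z = W.f z / W.f (-z)" for z
  have nz: "W.f y \<noteq> 0" if "y \<in> U0" for y using that Wf_zero by auto
  have cont: "continuous_on U0 R"
  proof -
    have "(\<lambda>z. W.f (-z)) holomorphic_on U0"
      by (rule holomorphic_on_compose_gen[OF _ holo_Wf[of UNIV], unfolded o_def]) (auto intro: holomorphic_intros)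
    thus ?thesis unfolding R_def using nz
      by (intro holomorphic_on_imp_continuous_on holomorphic_intros holo_Wf) auto
  qed
  have "\<forall>x\<in>U0 - {}. (R has_field_derivative 0) (at x)"
  proof
    fix x assume "x \<in> U0 - {}"
    hence x: "x \<in> U0" "-x \<in> U0" by auto
    have d1: "((\<lambda>z. W.f (-z)) has_field_derivative (Zs (-x) * W.f (-x) * -1)) (at x)"
      by (rule DERIV_chain2[where g="\<lambda>z. -z", OF Wf_deriv_at'[OF x(2)]]) (auto intro!: derivative_eq_intros)
    have "(R has_field_derivative ((Zs x * W.f x) * W.f (-x) - W.f x * (Zs (-x) * W.f (-x) * -1)) / (W.f (-x) * W.f (-x))) (at x)"
      unfolding R_def[abs_def] by (rule DERIV_divide[OF Wf_deriv_at'[OF x(1)] d1 nz[OF x(2)]])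
    moreover have "(Zs x * W.f x) * W.f (-x) - W.f x * (Zs (-x) * W.f (-x) * -1) = 0"
      using Zs_odd[OF x(1)] by (simp add: algebra_simps)
    ultimately show "(R has_field_derivative 0) (at x)" by simp
  qed
  then obtain c where c: "\<And>x. x \<in> U0 \<Longrightarrow> R x = c"
    using DERIV_zero_connected_constant[OF connected_U0 open_U0 finite.emptyI cont] by blast
  have "c = R 0" using c[of 0] by simp
  also have "\<dots> = 1" by (simp add: R_def Wf_0)
  finally have "R z = 1" using c[OF True] by simp
  thus ?thesis using nz[of "-z"] True by (simp add: R_def)
qed

lemma sigma_odd: "\<sigma> (-z) = - \<sigma> z"
  by (simp add: sigma_eq Wf_even)

lemma Wf_deriv_0: "deriv W.f 0 = 0"
proof -
  have d1: "((\<lambda>z. W.f (-z)) has_field_derivative (deriv W.f (-0) * -1)) (at 0)"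
    by (rule DERIV_chain2[where g="\<lambda>z. -z", OF Wf_deriv_at]) (auto intro!: derivative_eq_intros)
  hence "(W.f has_field_derivative (- deriv W.f 0)) (at 0)" by (simp add: Wf_even)
  from DERIV_unique[OF Wf_deriv_at this] show ?thesis by simp
qed

lemma sigma_deriv_even: "deriv \<sigma> (-z) = deriv \<sigma> z"
proof -
  have d1: "((\<lambda>z. \<sigma> (-z)) has_field_derivative (deriv \<sigma> (-z) * -1)) (at z)"
    by (rule DERIV_chain2[where g="\<lambda>z. -z", OF sigma_deriv_at]) (auto intro!: derivative_eq_intros)
  hence "((\<lambda>z. - \<sigma> z) has_field_derivative (- deriv \<sigma> (-z))) (at z)" by (simp add: sigma_odd)
  moreover have "((\<lambda>z. - \<sigma> z) has_field_derivative (- deriv \<sigma> z)) (at z)"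
    by (rule DERIV_minus[OF sigma_deriv_at])
  ultimately show ?thesis using DERIV_unique by fastforce
qed

lemma sigma_0: "\<sigma> 0 = 0" by (simp add: sigma_eq)

lemma zeta_quasi:
  assumes w: "w \<in> L" "w / 2 \<notin> L"
  shows "\<exists>\<eta>. \<forall>z. z \<notin> L \<longrightarrow> zeta (z + w) = zeta z + \<eta>"
proof -
  define D where "D z = zeta (z + w) - zeta z" for z
  have cont: "continuous_on (-L) D"
  proof -
    have "(\<lambda>z. z + w) ` (-L) \<subseteq> -L" using L_add_iff[OF w(1)] by auto
    hence "(\<lambda>z. zeta (z + w)) holomorphic_on -L"
      by (intro holomorphic_on_compose_gen[OF _ holo_zeta, unfolded o_def]) (auto intro: holomorphic_intros)
    thus ?thesis unfolding D_def by (intro holomorphic_on_imp_continuous_on holomorphic_intros holo_zeta)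
  qed
  have "\<forall>x\<in>-L - {}. (D has_field_derivative 0) (at x)"
  proof
    fix x assume "x \<in> -L - {}"
    hence x: "x \<notin> L" "x + w \<notin> L" using L_add_iff[OF w(1)] by auto
    have d1: "((\<lambda>z. zeta (z + w)) has_field_derivative (- P (x + w) * 1)) (at x)"
      by (rule DERIV_chain2[where g="\<lambda>z. z + w", OF zeta_deriv[OF x(2)]]) (auto intro!: derivative_eq_intros)
    have "(D has_field_derivative (- P (x + w) * 1 - - P x)) (at x)"
      unfolding D_def[abs_def] by (rule DERIV_diff[OF d1 zeta_deriv[OF x(1)]])
    thus "(D has_field_derivative 0) (at x)" using P_periodic[OF x(1) w(1)] by simp
  qed
  then obtain c where c: "\<And>x. x \<in> -L \<Longrightarrow> D x = c"
    using DERIV_zero_connected_constant[OF connected_compl_L open_compl_L finite.emptyI cont] by blast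
  show ?thesis by (rule exI[of _ c]) (use c in \<open>auto simp: D_def algebra_simps\<close>)
qed

lemma sigma_deriv_at': "z \<notin> L \<Longrightarrow> (\<sigma> has_field_derivative zeta z * \<sigma> z) (at z)"
  using sigma_deriv_at[of z] sigma_logderiv[of z] by simp

lemma sigma_quasi:
  assumes w: "w \<in> L" "w / 2 \<notin> L"
  shows "\<exists>c \<eta>. \<forall>z. \<sigma> (z + w) = c * exp (\<eta> * z) * \<sigma> z"
proof -
  obtain \<eta> where \<eta>: "\<And>z. z \<notin> L \<Longrightarrow> zeta (z + w) = zeta z + \<eta>" using zeta_quasi[OF w] by blast
  define g where "g z = \<sigma> (z + w) * exp (- \<eta> * z)" for z
  define R where "R z = g z / \<sigma> z" for z
  have nz: "\<sigma> y \<noteq> 0" if "y \<notin> L" for y using that sigma_zero by auto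
  have cont: "continuous_on (-L) R"
  proof -
    have "(\<lambda>z. \<sigma> (z + w)) holomorphic_on -L"
      by (rule holomorphic_on_compose_gen[OF _ holo_sigma[of UNIV], unfolded o_def]) (auto intro: holomorphic_intros)
    thus ?thesis unfolding R_def g_def using nz
      by (intro holomorphic_on_imp_continuous_on holomorphic_intros holo_sigma) auto
  qed
  have "\<forall>x\<in>-L - {}. (R has_field_derivative 0) (at x)"
  proof
    fix x assume "x \<in> -L - {}"
    hence x: "x \<notin> L" "x + w \<notin> L" using L_add_iff[OF w(1)] by auto
    have d1: "((\<lambda>z. \<sigma> (z + w)) has_field_derivative (zeta (x + w) * \<sigma> (x + w) * 1)) (at x)"
      by (rule DERIV_chain2[where g="\<lambda>z. z + w", OF sigma_deriv_at'[OF x(2)]]) (auto intro!: derivative_eq_intros)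
    have d2: "((\<lambda>z. exp (- \<eta> * z)) has_field_derivative (exp (- \<eta> * x) * (- \<eta>))) (at x)"
      by (auto intro!: derivative_eq_intros)
    define dG where "dG = (zeta (x + w) * \<sigma> (x + w) * 1) * exp (- \<eta> * x) + (exp (- \<eta> * x) * (- \<eta>)) * \<sigma> (x + w)"
    have dg: "(g has_field_derivative dG) (at x)"
      unfolding g_def[abs_def] dG_def by (rule DERIV_mult[OF d1 d2])
    have "(R has_field_derivative ((dG * \<sigma> x - g x * (zeta x * \<sigma> x)) / (\<sigma> x * \<sigma> x))) (at x)"
      unfolding R_def[abs_def] by (rule DERIV_divide[OF dg sigma_deriv_at'[OF x(1)] nz[OF x(1)]])
    moreover have "dG * \<sigma> x - g x * (zeta x * \<sigma> x) = 0"
      using \<eta>[OF x(1)] by (simp add: g_def dG_def algebra_simps)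
    ultimately show "(R has_field_derivative 0) (at x)" by simp
  qed
  then obtain c where c: "\<And>x. x \<in> -L \<Longrightarrow> R x = c"
    using DERIV_zero_connected_constant[OF connected_compl_L open_compl_L finite.emptyI cont] by blast
  have "\<sigma> (z + w) = c * exp (\<eta> * z) * \<sigma> z" for z
  proof (cases "z \<in> L")
    case True
    hence "z + w \<in> L" using L_add w(1) by auto
    thus ?thesis using True sigma_zero[of z] sigma_zero[of "z + w"] by simp
  next
    case False
    hence "g z = c * \<sigma> z" using c[of z] nz[of z] by (simp add: R_def field_simps)
    hence "\<sigma> (z + w) * exp (- \<eta> * z) * exp (\<eta> * z) = c * \<sigma> z * exp (\<eta> * z)" by (simp add: g_def)
    thus ?thesis by (simp add: exp_minus field_simps)
  qed
  thus ?thesis by blast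
qed

end

context ell
begin

lemma coords: "\<exists>s t::real. y = of_real s * w1 + of_real t * w2"
proof -
  define \<tau> where "\<tau> = w2 / w1"
  have q: "Im \<tau> \<noteq> 0" using nd by (auto simp: lattice_nondeg_def \<tau>_def)
  define u where "u = y / w1"
  define t where "t = Im u / Im \<tau>"
  define s where "s = Re u - t * Re \<tau>"
  have "of_real s + of_real t * \<tau> = u"
    using q by (intro complex_eqI) (auto simp: s_def t_def)
  hence "y = w1 * (of_real s + of_real t * \<tau>)" using w1_nz by (simp add: u_def)
  also have "\<dots> = of_real s * w1 + of_real t * w2" using w1_nz by (simp add: \<tau>_def field_simps)
  finally show ?thesis by blast
qed

lemma ball_c0: "z \<in> ball 0 c0 \<Longrightarrow> z \<noteq> 0 \<Longrightarrow> z \<notin> L"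
  using L_norm_ge[of z] by auto

lemma ball_c0_U0: "ball 0 c0 \<subseteq> U0"
  using ball_c0 by auto

lemma holo_H:
  shows "(\<lambda>x. \<sigma> (x + b) * \<sigma> (x - b) / \<sigma> x ^ 2 + \<sigma> b ^ 2 * (P x - P b)) holomorphic_on -L"
proof -
  have "(\<lambda>x. \<sigma> (x + b)) holomorphic_on -L"
    by (rule holomorphic_on_compose_gen[OF _ holo_sigma[of UNIV], unfolded o_def]) (auto intro: holomorphic_intros)
  moreover have "(\<lambda>x. \<sigma> (x - b)) holomorphic_on -L"
    by (rule holomorphic_on_compose_gen[OF _ holo_sigma[of UNIV], unfolded o_def]) (auto intro: holomorphic_intros)
  ultimately show ?thesis using sigma_zero
    by (intro holomorphic_intros holo_sigma holo_P) auto
qed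

lemma H_per_gen:
  assumes w: "w \<in> L" "w / 2 \<notin> L" and x: "x \<notin> L"
  shows "\<sigma> (x + w + b) * \<sigma> (x + w - b) / \<sigma> (x + w) ^ 2 + \<sigma> b ^ 2 * (P (x + w) - P b) =
         \<sigma> (x + b) * \<sigma> (x - b) / \<sigma> x ^ 2 + \<sigma> b ^ 2 * (P x - P b)"
proof -
  obtain c \<eta> where q: "\<And>z. \<sigma> (z + w) = c * exp (\<eta> * z) * \<sigma> z" using sigma_quasi[OF w] by blast
  have "\<sigma> (x + w) \<noteq> 0" using x L_add_iff[OF w(1), of x] sigma_zero by auto
  hence c: "c \<noteq> 0" using q[of x] by auto
  have sa: "\<sigma> x \<noteq> 0" using x sigma_zero by auto
  have e1: "\<sigma> (x + w + b) = c * exp (\<eta> * (x + b)) * \<sigma> (x + b)"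
    using q[of "x + b"] by (simp add: algebra_simps)
  have e2: "\<sigma> (x + w - b) = c * exp (\<eta> * (x - b)) * \<sigma> (x - b)"
    using q[of "x - b"] by (simp add: algebra_simps)
  have ee: "exp (\<eta> * (x + b)) * exp (\<eta> * (x - b)) = exp (\<eta> * x) ^ 2"
    by (simp add: exp_add[symmetric] power2_eq_square algebra_simps)
  have "\<sigma> (x + w + b) * \<sigma> (x + w - b) / \<sigma> (x + w) ^ 2 =
        (c^2 * (exp (\<eta> * (x + b)) * exp (\<eta> * (x - b))) * (\<sigma> (x + b) * \<sigma> (x - b))) / (c^2 * exp (\<eta> * x) ^ 2 * \<sigma> x ^ 2)"
    unfolding e1 e2 q[of x] by (simp add: power2_eq_square algebra_simps)
  also have "\<dots> = \<sigma> (x + b) * \<sigma> (x - b) / \<sigma> x ^ 2"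
    unfolding ee using c sa by (simp add: field_simps)
  finally show ?thesis using P_periodic[OF x w(1)] by simp
qed

lemma sigma_identity:
  assumes x: "x \<notin> L" and b: "b \<notin> L"
  shows "\<sigma> (x + b) * \<sigma> (x - b) = \<sigma> x ^ 2 * \<sigma> b ^ 2 * (P b - P x)"
proof -
  define H where "H x = \<sigma> (x + b) * \<sigma> (x - b) / \<sigma> x ^ 2 + \<sigma> b ^ 2 * (P x - P b)" for x
  have Hper1: "H (z + w1) = H z" if "z \<notin> L" for z
    unfolding H_def using H_per_gen[OF L_w1 half_w1 that] by simp
  have Hper2: "H (z + w2) = H z" if "z \<notin> L" for z
    unfolding H_def using H_per_gen[OF L_w2 half_w2 that] by simp
  define N where "N x = \<sigma> (x + b) * \<sigma> (x - b) + \<sigma> b ^ 2 * W.f x ^ 2" for x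
  have holN: "N holomorphic_on UNIV"
  proof -
    have "(\<lambda>x. \<sigma> (x + b)) holomorphic_on UNIV"
      by (rule holomorphic_on_compose_gen[OF _ holo_sigma[of UNIV], unfolded o_def]) (auto intro: holomorphic_intros)
    moreover have "(\<lambda>x. \<sigma> (x - b)) holomorphic_on UNIV"
      by (rule holomorphic_on_compose_gen[OF _ holo_sigma[of UNIV], unfolded o_def]) (auto intro: holomorphic_intros)
    ultimately show ?thesis unfolding N_def[abs_def] by (intro holomorphic_intros holo_Wf)
  qed
  have N0: "N 0 = 0" by (simp add: N_def sigma_odd Wf_0 power2_eq_square)
  have dN0: "deriv N 0 = 0"
  proof -
    have d1: "((\<lambda>x. \<sigma> (x + b)) has_field_derivative (deriv \<sigma> (0 + b) * 1)) (at 0)"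
      by (rule DERIV_chain2[where g="\<lambda>x. x + b", OF sigma_deriv_at]) (auto intro!: derivative_eq_intros)
    have d2: "((\<lambda>x. \<sigma> (x - b)) has_field_derivative (deriv \<sigma> (0 - b) * 1)) (at 0)"
      by (rule DERIV_chain2[where g="\<lambda>x. x - b", OF sigma_deriv_at]) (auto intro!: derivative_eq_intros)
    have d3: "((\<lambda>x. \<sigma> (x + b) * \<sigma> (x - b)) has_field_derivative
                 (deriv \<sigma> (0 + b) * 1 * \<sigma> (0 - b) + deriv \<sigma> (0 - b) * 1 * \<sigma> (0 + b))) (at 0)"
      by (rule DERIV_mult[OF d1 d2])
    have d4: "((\<lambda>x. W.f x * W.f x) has_field_derivative (deriv W.f 0 * W.f 0 + deriv W.f 0 * W.f 0)) (at 0)"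
      by (rule DERIV_mult[OF Wf_deriv_at Wf_deriv_at])
    hence d4': "((\<lambda>x. \<sigma> b ^ 2 * (W.f x * W.f x)) has_field_derivative (\<sigma> b ^ 2 * (deriv W.f 0 * W.f 0 + deriv W.f 0 * W.f 0))) (at 0)"
      by (rule DERIV_cmult)
    have "(N has_field_derivative ((deriv \<sigma> (0 + b) * 1 * \<sigma> (0 - b) + deriv \<sigma> (0 - b) * 1 * \<sigma> (0 + b)) +
             \<sigma> b ^ 2 * (deriv W.f 0 * W.f 0 + deriv W.f 0 * W.f 0))) (at 0)"
      unfolding N_def[abs_def] power2_eq_square[of "W.f _"] using DERIV_add[OF d3 d4'] by simp
    moreover have "(deriv \<sigma> (0 + b) * 1 * \<sigma> (0 - b) + deriv \<sigma> (0 - b) * 1 * \<sigma> (0 + b)) +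
             \<sigma> b ^ 2 * (deriv W.f 0 * W.f 0 + deriv W.f 0 * W.f 0) = 0"
      using sigma_deriv_even[of b] by (simp add: sigma_odd Wf_deriv_0)
    ultimately show ?thesis by (simp add: DERIV_imp_deriv)
  qed
  define N1 where "N1 = (\<lambda>z. if z = 0 then deriv N 0 else (N z - N 0) / (z - 0))"
  have holN1: "N1 holomorphic_on UNIV" unfolding N1_def by (rule pole_lemma[OF holN]) auto
  define N2 where "N2 = (\<lambda>z. if z = 0 then deriv N1 0 else (N1 z - N1 0) / (z - 0))"
  have holN2: "N2 holomorphic_on UNIV" unfolding N2_def by (rule pole_lemma[OF holN1]) auto
  have N2_eq: "N2 z = N z / z^2" if "z \<noteq> 0" for z
    using that by (simp add: N2_def N1_def N0 dN0 power2_eq_square)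
  define H0 where "H0 x = N2 x / W.f x ^ 2 + \<sigma> b ^ 2 * (T x - P b)" for x
  have holH0: "H0 holomorphic_on ball 0 c0"
  proof -
    have "T holomorphic_on ball 0 c0" by (rule holomorphic_on_subset[OF holo_T ball_c0_U0])
    moreover have "W.f x \<noteq> 0" if "x \<in> ball 0 c0" for x using ball_c0_U0 that Wf_zero[of x] by auto
    ultimately show ?thesis unfolding H0_def[abs_def]
      by (intro holomorphic_intros holomorphic_on_subset[OF holN2] holo_Wf) auto
  qed
  have H_H0: "H x = H0 x" if "x \<in> ball 0 c0" "x \<noteq> 0" for x
  proof -
    have W: "W.f x \<noteq> 0" using ball_c0_U0 that Wf_zero[of x] by auto
    show ?thesis using that W
      by (simp add: H_def H0_def N2_eq N_def sigma_eq wp_eq field_simps power2_eq_square)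
  qed
  define Hx where "Hx z = (if z \<in> L then H0 0 else H z)" for z
  have Hxper1: "Hx (z + w1) = Hx z" for z
    using Hper1[of z] L_add_iff[OF L_w1, of z] by (auto simp: Hx_def)
  have Hxper2: "Hx (z + w2) = Hx z" for z
    using Hper2[of z] L_add_iff[OF L_w2, of z] by (auto simp: Hx_def)
  have Hxper: "Hx (z + \<omega>) = Hx z" if "\<omega> \<in> L" for z \<omega>
    using periodic_all[of Hx, OF Hxper1 Hxper2 that] by blast
  have Hx_H0: "Hx x = H0 x" if "x \<in> ball 0 c0" for x
    using that H_H0[of x] ball_c0[of x] by (cases "x = 0") (auto simp: Hx_def)
  have holHx: "Hx holomorphic_on UNIV"
  proof -
    have "Hx analytic_on UNIV" unfolding analytic_on_def
    proof
      fix z :: complex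
      show "\<exists>e>0. Hx holomorphic_on ball z e"
      proof (cases "z \<in> L")
        case False
        then obtain e where e: "e > 0" "ball z e \<subseteq> -L" using open_compl_L openE by blast
        have "H holomorphic_on ball z e"
          using holomorphic_on_subset[OF holo_H e(2)] unfolding H_def[abs_def] .
        hence "Hx holomorphic_on ball z e"
          by (rule holomorphic_transform) (use e in \<open>auto simp: Hx_def\<close>)
        thus ?thesis using e by blast
      next
        case True
        have "(\<lambda>y. H0 (y - z)) holomorphic_on ball z c0"
          by (rule holomorphic_on_compose_gen[OF _ holH0, unfolded o_def])
             (auto intro: holomorphic_intros simp: dist_norm)
        moreover have "H0 (y - z) = Hx y" if "y \<in> ball z c0" for y
        proof -
          have "Hx y = Hx ((y - z) + z)" by simp
          also have "\<dots> = Hx (y - z)" by (rule Hxper[OF True])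
          also have "\<dots> = H0 (y - z)" using that by (intro Hx_H0) (auto simp: dist_norm norm_minus_commute)
          finally show ?thesis by simp
        qed
        ultimately have "Hx holomorphic_on ball z c0" by (rule holomorphic_transform)
        thus ?thesis using c0(1) by blast
      qed
    qed
    thus ?thesis by (simp add: analytic_imp_holomorphic)
  qed
  define K where "K = (\<lambda>p. of_real (fst p) * w1 + of_real (snd p) * w2) ` ({0..1::real} \<times> {0..1::real})"
  have "compact K" unfolding K_def
    by (intro compact_continuous_image compact_Times continuous_intros) auto
  hence "compact (Hx ` K)"
    by (intro compact_continuous_image holomorphic_on_imp_continuous_on holomorphic_on_subset[OF holHx]) auto
  hence bK: "bounded (Hx ` K)" by (rule compact_imp_bounded)
  have "range Hx \<subseteq> Hx ` K"
  proof
    fix v assume "v \<in> range Hx"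
    then obtain y where v: "v = Hx y" by auto
    obtain s t where y: "y = of_real s * w1 + of_real t * w2" using coords by blast
    define \<omega> where "\<omega> = of_int \<lfloor>s\<rfloor> * w1 + of_int \<lfloor>t\<rfloor> * w2"
    have \<omega>: "\<omega> \<in> L" by (auto simp: \<omega>_def in_L_iff)
    define k where "k = y - \<omega>"
    have "k = of_real (s - of_int \<lfloor>s\<rfloor>) * w1 + of_real (t - of_int \<lfloor>t\<rfloor>) * w2"
      by (simp add: k_def y \<omega>_def algebra_simps)
    moreover have "s - of_int \<lfloor>s\<rfloor> \<in> {0..1}" "t - of_int \<lfloor>t\<rfloor> \<in> {0..1}"
      by (auto simp: floor_le_iff) (linarith+)
    ultimately have "k \<in> K" unfolding K_def by (auto intro!: image_eqI[of _ _ "(s - of_int \<lfloor>s\<rfloor>, t - of_int \<lfloor>t\<rfloor>)"])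
    moreover have "Hx y = Hx k" using Hxper[OF \<omega>, of k] by (simp add: k_def)
    ultimately show "v \<in> Hx ` K" using v by blast
  qed
  hence "bounded (range Hx)" using bK bounded_subset by blast
  hence "Hx constant_on UNIV" by (rule Liouville_theorem[OF holHx])
  then obtain C where C: "\<And>z. Hx z = C" by (auto simp: constant_on_def)
  have "C = Hx b" using C by simp
  also have "\<dots> = 0" using b by (simp add: Hx_def H_def sigma_0)
  finally have "H x = 0" using C[of x] x by (simp add: Hx_def)
  moreover have "\<sigma> x \<noteq> 0" using x sigma_zero by auto
  ultimately show ?thesis unfolding H_def by (simp add: field_simps)
qed

end

lemma alg1:
  fixes X u v P M d c :: complex
  assumes X1: "X \<noteq> 1" and nz: "v - M \<noteq> 0" "u - P \<noteq> 0" "P - M \<noteq> 0" "u - v \<noteq> 0" "d \<noteq> 0"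
    and c: "c * (P - M) = - d"
  shows "((X + 1) / (X - 1) = ((v - P) * (u - M)) / ((v - M) * (u - P))) \<longleftrightarrow>
         (d * X = 2 * (c * (u * v - (P + M) * (u + v) / 2 + P * M)) / (u - v))"
proof -
  define Q where "Q = u * v - (P + M) * (u + v) / 2 + P * M"
  have X1': "X - 1 \<noteq> 0" using X1 by simp
  have "((X + 1) / (X - 1) = ((v - P) * (u - M)) / ((v - M) * (u - P))) \<longleftrightarrow>
        (X + 1) * ((v - M) * (u - P)) = ((v - P) * (u - M)) * (X - 1)"
    using X1' nz by (intro frac_eq_eq) auto
  also have "\<dots> \<longleftrightarrow> (X + 1) * ((v - M) * (u - P)) - (X - 1) * ((v - P) * (u - M)) = 0"
    by (simp only: right_minus_eq mult.commute[of "(v - P) * (u - M)"])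
  also have "(X + 1) * ((v - M) * (u - P)) - (X - 1) * ((v - P) * (u - M)) = X * (P - M) * (u - v) + 2 * Q"
    unfolding Q_def by (simp add: algebra_simps)
  also have "X * (P - M) * (u - v) + 2 * Q = 0 \<longleftrightarrow> d * (X * (P - M) * (u - v) + 2 * Q) = 0" using nz by simp
  also have "d * (X * (P - M) * (u - v) + 2 * Q) = (P - M) * (d * X * (u - v) - 2 * (c * Q))"
  proof -
    have "(P - M) * (d * X * (u - v) - 2 * (c * Q)) = (P - M) * d * X * (u - v) - 2 * (c * (P - M)) * Q"
      by (simp add: algebra_simps)
    also have "\<dots> = d * (X * (P - M) * (u - v) + 2 * Q)" unfolding c by (simp add: algebra_simps)
    finally show ?thesis by simp
  qed
  also have "\<dots> = 0 \<longleftrightarrow> d * X = 2 * (c * Q) / (u - v)" using nz by (simp add: divide_simps)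
  finally show ?thesis unfolding Q_def .
qed
lemma alg2:
  fixes Y u w P M d c :: complex
  assumes Y1: "Y \<noteq> -1" and nz: "u - M \<noteq> 0" "w - P \<noteq> 0" "P - M \<noteq> 0" "u - w \<noteq> 0" "d \<noteq> 0"
    and c: "c * (P - M) = - d"
  shows "((Y - 1) / (Y + 1) = ((u - P) * (w - M)) / ((u - M) * (w - P))) \<longleftrightarrow>
         (d * Y = 2 * (c * (u * w - (P + M) * (u + w) / 2 + P * M)) / (u - w))"
proof -
  define Q where "Q = u * w - (P + M) * (u + w) / 2 + P * M"
  have Y1': "Y + 1 \<noteq> 0"
  proof
    assume h: "Y + 1 = 0"
    have "Y = (Y + 1) - 1" by simp
    also have "\<dots> = -1" using h by simp
    finally show False using Y1 by simp
  qed
  have "((Y - 1) / (Y + 1) = ((u - P) * (w - M)) / ((u - M) * (w - P))) \<longleftrightarrow>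
        (Y - 1) * ((u - M) * (w - P)) = ((u - P) * (w - M)) * (Y + 1)"
    using Y1' nz by (intro frac_eq_eq) auto
  also have "\<dots> \<longleftrightarrow> (Y - 1) * ((u - M) * (w - P)) - (Y + 1) * ((u - P) * (w - M)) = 0"
    by (simp only: right_minus_eq mult.commute[of "(u - P) * (w - M)"])
  also have "(Y - 1) * ((u - M) * (w - P)) - (Y + 1) * ((u - P) * (w - M)) = - (Y * (P - M) * (u - w) + 2 * Q)"
    unfolding Q_def by (simp add: algebra_simps)
  also have "- (Y * (P - M) * (u - w) + 2 * Q) = 0 \<longleftrightarrow> Y * (P - M) * (u - w) + 2 * Q = 0"
    by (simp only: neg_equal_0_iff_equal)
  also have "\<dots> \<longleftrightarrow> d * (Y * (P - M) * (u - w) + 2 * Q) = 0" using nz by simp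
  also have "d * (Y * (P - M) * (u - w) + 2 * Q) = (P - M) * (d * Y * (u - w) - 2 * (c * Q))"
  proof -
    have "(P - M) * (d * Y * (u - w) - 2 * (c * Q)) = (P - M) * d * Y * (u - w) - 2 * (c * (P - M)) * Q"
      by (simp add: algebra_simps)
    also have "\<dots> = d * (Y * (P - M) * (u - w) + 2 * Q)" unfolding c by (simp add: algebra_simps)
    finally show ?thesis by simp
  qed
  also have "\<dots> = 0 \<longleftrightarrow> d * Y = 2 * (c * Q) / (u - w)" using nz by (simp add: divide_simps)
  finally show ?thesis unfolding Q_def .
qed

lemma tder_chain:
  assumes "f differentiable (at t)" "(g has_field_derivative g') (at (f t))"
  shows "tder (\<lambda>s. g (f s)) t = g' * tder f t"
proof -
  have "(f has_vector_derivative vector_derivative f (at t)) (at t)"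
    using assms(1) vector_derivative_works by blast
  from field_vector_diff_chain_at[OF this assms(2)]
  have "((\<lambda>s. g (f s)) has_vector_derivative (vector_derivative f (at t) * g')) (at t)"
    by (simp add: o_def)
  thus ?thesis unfolding tder_def by (simp add: vector_derivative_at mult.commute)
qed

context ell
begin

lemma zeta_relation:
  assumes u: "u \<notin> L" and b: "b \<notin> L" and ub: "u + b \<notin> L" "u - b \<notin> L"
  shows "zeta (u + b) + zeta (u - b) = 2 * zeta u - wp' w1 w2 u / (P b - P u)" and "P b \<noteq> P u"
proof -
  have ident: "\<sigma> (v + b) * \<sigma> (v - b) = \<sigma> v ^ 2 * \<sigma> b ^ 2 * (P b - P v)" if "v \<in> -L" for v
    using sigma_identity[of v b] that b by auto
  have G0: "\<sigma> (u + b) * \<sigma> (u - b) \<noteq> 0" using ub sigma_zero by auto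
  hence K: "P b - P u \<noteq> 0" using ident[of u] u by auto
  thus "P b \<noteq> P u" by simp
  have su: "\<sigma> u \<noteq> 0" "\<sigma> b \<noteq> 0" using u b sigma_zero by auto
  have d1: "((\<lambda>v. \<sigma> (v + b)) has_field_derivative (zeta (u + b) * \<sigma> (u + b) * 1)) (at u)"
    by (rule DERIV_chain2[where g="\<lambda>v. v + b", OF sigma_deriv_at'[OF ub(1)]]) (auto intro!: derivative_eq_intros)
  have d2: "((\<lambda>v. \<sigma> (v - b)) has_field_derivative (zeta (u - b) * \<sigma> (u - b) * 1)) (at u)"
    by (rule DERIV_chain2[where g="\<lambda>v. v - b", OF sigma_deriv_at'[OF ub(2)]]) (auto intro!: derivative_eq_intros)
  have dG1: "((\<lambda>v. \<sigma> (v + b) * \<sigma> (v - b)) has_field_derivative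
      (zeta (u + b) * \<sigma> (u + b) * 1 * \<sigma> (u - b) + zeta (u - b) * \<sigma> (u - b) * 1 * \<sigma> (u + b))) (at u)"
    by (rule DERIV_mult[OF d1 d2])
  have dG1': "((\<lambda>v. \<sigma> v ^ 2 * \<sigma> b ^ 2 * (P b - P v)) has_field_derivative
      (zeta (u + b) * \<sigma> (u + b) * 1 * \<sigma> (u - b) + zeta (u - b) * \<sigma> (u - b) * 1 * \<sigma> (u + b))) (at u)"
    by (rule has_field_derivative_transform_within_open[OF dG1 open_compl_L]) (use u ident in auto)
  have ds: "((\<lambda>v. \<sigma> v * \<sigma> v) has_field_derivative (zeta u * \<sigma> u * \<sigma> u + zeta u * \<sigma> u * \<sigma> u)) (at u)"
    by (rule DERIV_mult[OF sigma_deriv_at'[OF u] sigma_deriv_at'[OF u]])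
  have dk: "((\<lambda>v. \<sigma> b ^ 2 * (P b - P v)) has_field_derivative (\<sigma> b ^ 2 * (0 - wp' w1 w2 u))) (at u)"
    by (rule DERIV_cmult[OF DERIV_diff[OF DERIV_const P_deriv_at[OF u]]])
  have dG2: "((\<lambda>v. \<sigma> v ^ 2 * \<sigma> b ^ 2 * (P b - P v)) has_field_derivative
      ((zeta u * \<sigma> u * \<sigma> u + zeta u * \<sigma> u * \<sigma> u) * (\<sigma> b ^ 2 * (P b - P u)) + (\<sigma> b ^ 2 * (0 - wp' w1 w2 u)) * (\<sigma> u * \<sigma> u))) (at u)"
    using DERIV_mult[OF ds dk] by (simp add: power2_eq_square mult.assoc)
  have eq: "zeta (u + b) * \<sigma> (u + b) * 1 * \<sigma> (u - b) + zeta (u - b) * \<sigma> (u - b) * 1 * \<sigma> (u + b) =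
      (zeta u * \<sigma> u * \<sigma> u + zeta u * \<sigma> u * \<sigma> u) * (\<sigma> b ^ 2 * (P b - P u)) + (\<sigma> b ^ 2 * (0 - wp' w1 w2 u)) * (\<sigma> u * \<sigma> u)"
    using DERIV_unique[OF dG1' dG2] .
  have "(zeta (u + b) + zeta (u - b)) * (\<sigma> u ^ 2 * \<sigma> b ^ 2 * (P b - P u)) =
        (zeta (u + b) + zeta (u - b)) * (\<sigma> (u + b) * \<sigma> (u - b))"
    using ident[of u] u by simp
  also have "\<dots> = zeta (u + b) * \<sigma> (u + b) * 1 * \<sigma> (u - b) + zeta (u - b) * \<sigma> (u - b) * 1 * \<sigma> (u + b)"
    by (simp add: algebra_simps)
  also have "\<dots> = (zeta u * \<sigma> u * \<sigma> u + zeta u * \<sigma> u * \<sigma> u) * (\<sigma> b ^ 2 * (P b - P u)) + (\<sigma> b ^ 2 * (0 - wp' w1 w2 u)) * (\<sigma> u * \<sigma> u)"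
    by (rule eq)
  also have "\<dots> = 2 * zeta u * (\<sigma> u ^ 2 * \<sigma> b ^ 2 * (P b - P u)) - wp' w1 w2 u * (\<sigma> u ^ 2 * \<sigma> b ^ 2)"
    by (simp add: algebra_simps power2_eq_square)
  also have "wp' w1 w2 u * (\<sigma> u ^ 2 * \<sigma> b ^ 2) = wp' w1 w2 u / (P b - P u) * (\<sigma> u ^ 2 * \<sigma> b ^ 2 * (P b - P u))"
    using K by simp
  also have "2 * zeta u * (\<sigma> u ^ 2 * \<sigma> b ^ 2 * (P b - P u)) - wp' w1 w2 u / (P b - P u) * (\<sigma> u ^ 2 * \<sigma> b ^ 2 * (P b - P u)) =
       (2 * zeta u - wp' w1 w2 u / (P b - P u)) * (\<sigma> u ^ 2 * \<sigma> b ^ 2 * (P b - P u))"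
    by (simp add: algebra_simps)
  finally have "(zeta (u + b) + zeta (u - b)) * (\<sigma> u ^ 2 * \<sigma> b ^ 2 * (P b - P u)) =
        (2 * zeta u - wp' w1 w2 u / (P b - P u)) * (\<sigma> u ^ 2 * \<sigma> b ^ 2 * (P b - P u))" .
  moreover have "\<sigma> u ^ 2 * \<sigma> b ^ 2 * (P b - P u) \<noteq> 0" using su K by simp
  ultimately show "zeta (u + b) + zeta (u - b) = 2 * zeta u - wp' w1 w2 u / (P b - P u)" by simp
qed

lemma wp_add:
  assumes x: "x \<notin> L" and b: "\<beta> \<notin> L" and xb: "x + \<beta> \<notin> L" "x - \<beta> \<notin> L"
  shows "P (x + \<beta>) - P (x - \<beta>) = - wp' w1 w2 x * wp' w1 w2 \<beta> / (P x - P \<beta>)^2" and "P x \<noteq> P \<beta>"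
proof -
  define V where "V = -L \<inter> (\<lambda>b. x + b) -` (-L) \<inter> (\<lambda>b. x - b) -` (-L)"
  have V: "open V" unfolding V_def
    by (intro open_Int open_compl_L continuous_open_vimage) (auto intro!: continuous_intros)
  have bV: "\<beta> \<in> V" using b xb by (auto simp: V_def)
  have rel: "zeta (x + b) + zeta (x - b) = 2 * zeta x - wp' w1 w2 x / (P b - P x)" if "b \<in> V" for b
    using zeta_relation(1)[OF x] that by (auto simp: V_def)
  have K: "P \<beta> - P x \<noteq> 0" using zeta_relation(2)[OF x b xb] by simp
  thus "P x \<noteq> P \<beta>" by simp
  have d1: "((\<lambda>b. zeta (x + b)) has_field_derivative (- P (x + \<beta>) * 1)) (at \<beta>)"
    by (rule DERIV_chain2[where g="\<lambda>b. x + b", OF zeta_deriv[OF xb(1)]]) (auto intro!: derivative_eq_intros)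
  have d2: "((\<lambda>b. zeta (x - b)) has_field_derivative (- P (x - \<beta>) * -1)) (at \<beta>)"
    by (rule DERIV_chain2[where g="\<lambda>b. x - b", OF zeta_deriv[OF xb(2)]]) (auto intro!: derivative_eq_intros)
  have f1: "((\<lambda>b. zeta (x + b) + zeta (x - b)) has_field_derivative (- P (x + \<beta>) * 1 + - P (x - \<beta>) * -1)) (at \<beta>)"
    by (rule DERIV_add[OF d1 d2])
  have f1': "((\<lambda>b. 2 * zeta x - wp' w1 w2 x / (P b - P x)) has_field_derivative (- P (x + \<beta>) * 1 + - P (x - \<beta>) * -1)) (at \<beta>)"
    by (rule has_field_derivative_transform_within_open[OF f1 V bV]) (use rel in auto)
  have dq: "((\<lambda>b. wp' w1 w2 x / (P b - P x)) has_field_derivative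
      ((0 * (P \<beta> - P x) - wp' w1 w2 x * (wp' w1 w2 \<beta> - 0)) / ((P \<beta> - P x) * (P \<beta> - P x)))) (at \<beta>)"
    by (rule DERIV_divide[OF DERIV_const DERIV_diff[OF P_deriv_at[OF b] DERIV_const] K])
  have f2: "((\<lambda>b. 2 * zeta x - wp' w1 w2 x / (P b - P x)) has_field_derivative
      (0 - (0 * (P \<beta> - P x) - wp' w1 w2 x * (wp' w1 w2 \<beta> - 0)) / ((P \<beta> - P x) * (P \<beta> - P x)))) (at \<beta>)"
    by (rule DERIV_diff[OF DERIV_const dq])
  have "- P (x + \<beta>) * 1 + - P (x - \<beta>) * -1 = 0 - (0 * (P \<beta> - P x) - wp' w1 w2 x * (wp' w1 w2 \<beta> - 0)) / ((P \<beta> - P x) * (P \<beta> - P x))"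
    by (rule DERIV_unique[OF f1' f2])
  hence "P (x - \<beta>) - P (x + \<beta>) = wp' w1 w2 x * wp' w1 w2 \<beta> / (P \<beta> - P x)^2"
    by (simp add: power2_eq_square)
  moreover have "(P \<beta> - P x)^2 = (P x - P \<beta>)^2" by (simp add: power2_commute)
  ultimately show "P (x + \<beta>) - P (x - \<beta>) = - wp' w1 w2 x * wp' w1 w2 \<beta> / (P x - P \<beta>)^2"
    by (simp add: algebra_simps)
qed

end

lemma frac_ratio_aux:
  fixes A B p1 p2 m1 m2 :: complex
  assumes "A \<noteq> 0" "B \<noteq> 0" "p2 \<noteq> 0" "m2 \<noteq> 0" "m1 \<noteq> 0"
  shows "(A * p1 / (B * m1)) / (A * p2 / (B * m2)) = (p1 * m2) / (m1 * p2)"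
  using assms by (simp add: field_simps)

context ell
begin

lemma wp'_nonzero:
  assumes b: "\<beta> \<notin> L" and b2: "2 * \<beta> \<notin> L"
  shows "wp' w1 w2 \<beta> \<noteq> 0"
proof
  assume d0: "wp' w1 w2 \<beta> = 0"
  obtain e1 where e1: "e1 > 0" "ball \<beta> e1 \<subseteq> -L" using open_compl_L b openE by blast
  obtain e2 where e2: "e2 > 0" "ball (2 * \<beta>) e2 \<subseteq> -L" using open_compl_L b2 openE by blast
  define d where "d = min c0 (min e1 e2)"
  have d: "d > 0" using c0(1) e1 e2 by (simp add: d_def)
  have evh: "y \<notin> L \<and> y + \<beta> \<notin> L \<and> y + 2 * \<beta> \<notin> L" if y: "y \<noteq> 0" "dist y 0 < d" for y
  proof (intro conjI)
    show "y \<notin> L" using y ball_c0[of y] by (auto simp: d_def)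
    have "y + \<beta> \<in> ball \<beta> e1" using y by (auto simp: dist_norm d_def)
    thus "y + \<beta> \<notin> L" using e1 by auto
    have "y + 2 * \<beta> \<in> ball (2 * \<beta>) e2" using y by (auto simp: dist_norm d_def)
    thus "y + 2 * \<beta> \<notin> L" using e2 by auto
  qed
  have ev: "eventually (\<lambda>y. y \<notin> L \<and> y + \<beta> \<notin> L \<and> y + 2 * \<beta> \<notin> L) (at 0)"
    unfolding eventually_at using d evh by blast
  have ev2: "eventually (\<lambda>y. 1 + y^2 * T y = y^2 * P (y + 2 * \<beta>)) (at 0)"
  proof -
    have "eventually (\<lambda>y. y \<noteq> 0) (at (0::complex))" by (simp add: eventually_at_filter)
    with ev show ?thesis
    proof eventually_elim
      case (elim y)
      have x: "y + \<beta> \<notin> L" "(y + \<beta>) + \<beta> \<notin> L" "(y + \<beta>) - \<beta> \<notin> L"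
        using elim by (auto simp: algebra_simps mult_2)
      have "P ((y + \<beta>) + \<beta>) - P ((y + \<beta>) - \<beta>) = 0"
        using wp_add(1)[OF x(1) b x(2) x(3)] d0 by simp
      hence "P (y + 2 * \<beta>) = P y" by (simp add: algebra_simps mult_2)
      thus ?case using elim by (simp add: wp_eq field_simps)
    qed
  qed
  have cT: "isCont T 0"
  proof -
    have "continuous_on U0 T" by (rule holomorphic_on_imp_continuous_on[OF holo_T])
    moreover have "(0::complex) \<in> U0" by simp
    ultimately show ?thesis using continuous_on_eq_continuous_at[OF open_U0, of T] by blast
  qed
  have l1: "((\<lambda>y. 1 + y^2 * T y) \<longlongrightarrow> 1 + 0^2 * T 0) (at 0)"
    by (intro tendsto_intros isCont_tendsto_compose[OF cT] tendsto_ident_at)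
  have cP: "isCont P (2 * \<beta>)"
  proof -
    have "continuous_on (-L) P" by (rule holomorphic_on_imp_continuous_on[OF holo_P])
    moreover have "2 * \<beta> \<in> -L" using b2 by simp
    ultimately show ?thesis using continuous_on_eq_continuous_at[OF open_compl_L, of P] by blast
  qed
  have "((\<lambda>y. y + 2 * \<beta>) \<longlongrightarrow> 0 + 2 * \<beta>) (at 0)" by (intro tendsto_intros)
  hence "((\<lambda>y. P (y + 2 * \<beta>)) \<longlongrightarrow> P (2 * \<beta>)) (at 0)"
    using isCont_tendsto_compose[OF cP] by simp
  hence l2: "((\<lambda>y. y^2 * P (y + 2 * \<beta>)) \<longlongrightarrow> 0^2 * P (2 * \<beta>)) (at 0)"
    by (intro tendsto_intros)
  have "((\<lambda>y. y^2 * P (y + 2 * \<beta>)) \<longlongrightarrow> 1 + 0^2 * T 0) (at 0)"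
    by (rule Lim_transform_eventually[OF l1 ev2])
  from tendsto_unique[OF _ this l2] show False by simp
qed

lemma half_nondeg: "lattice_nondeg (w1 / 2) (w2 / 2)"
  using nd by (auto simp: lattice_nondeg_def)

lemma half_sub: "z \<in> L \<Longrightarrow> z \<in> lattice (w1 / 2) (w2 / 2)"
proof -
  assume "z \<in> L"
  then obtain m n :: int where "z = of_int m * w1 + of_int n * w2" by (auto simp: in_L_iff)
  hence "z = of_int (2 * m) * (w1 / 2) + of_int (2 * n) * (w2 / 2)" by simp
  thus ?thesis unfolding lattice_def by blast
qed

lemma half_2: "\<beta> \<notin> lattice (w1 / 2) (w2 / 2) \<Longrightarrow> 2 * \<beta> \<notin> L"
proof
  assume "\<beta> \<notin> lattice (w1 / 2) (w2 / 2)" "2 * \<beta> \<in> L"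
  then obtain m n :: int where "2 * \<beta> = of_int m * w1 + of_int n * w2" by (auto simp: in_L_iff)
  hence "\<beta> = of_int m * (w1 / 2) + of_int n * (w2 / 2)" by (simp add: field_simps)
  hence "\<beta> \<in> lattice (w1 / 2) (w2 / 2)" unfolding lattice_def by blast
  thus False using \<open>\<beta> \<notin> lattice (w1 / 2) (w2 / 2)\<close> by blast
qed

lemma half_not_islimpt: "\<not> z islimpt lattice (w1 / 2) (w2 / 2)"
proof -
  interpret H: ell "w1 / 2" "w2 / 2" by unfold_locales (rule half_nondeg)
  show ?thesis by (rule H.not_islimpt_L)
qed

lemma Fsig_eq:
  assumes x1: "x1 \<notin> L" and p: "x0 + \<alpha> \<notin> L" and m: "x0 - \<alpha> \<notin> L" and ok: "Fsig_ok w1 w2 x0 x1 \<alpha>"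
  shows "Fsig w1 w2 x0 x1 \<alpha> = \<sigma> (x0 + \<alpha>) ^ 2 * (P x1 - P (x0 + \<alpha>)) / (\<sigma> (x0 - \<alpha>) ^ 2 * (P x1 - P (x0 - \<alpha>)))"
    and "P x1 - P (x0 + \<alpha>) \<noteq> 0" "P x1 - P (x0 - \<alpha>) \<noteq> 0"
    and "\<sigma> (x0 + \<alpha>) \<noteq> 0" "\<sigma> (x0 - \<alpha>) \<noteq> 0"
proof -
  have a1: "x0 + \<alpha> + x1 = x0 + x1 + \<alpha>" "x0 + \<alpha> - x1 = x0 - x1 + \<alpha>" by (simp_all add: algebra_simps)
  have a2: "x0 - \<alpha> + x1 = x0 + x1 - \<alpha>" "x0 - \<alpha> - x1 = x0 - x1 - \<alpha>" by (simp_all add: algebra_simps)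
  have i1: "\<sigma> (x0 + x1 + \<alpha>) * \<sigma> (x0 - x1 + \<alpha>) = \<sigma> (x0 + \<alpha>) ^ 2 * \<sigma> x1 ^ 2 * (P x1 - P (x0 + \<alpha>))"
    using sigma_identity[OF p x1] unfolding a1 .
  have i2: "\<sigma> (x0 + x1 - \<alpha>) * \<sigma> (x0 - x1 - \<alpha>) = \<sigma> (x0 - \<alpha>) ^ 2 * \<sigma> x1 ^ 2 * (P x1 - P (x0 - \<alpha>))"
    using sigma_identity[OF m x1] unfolding a2 .
  have n1: "\<sigma> (x0 + x1 + \<alpha>) * \<sigma> (x0 - x1 + \<alpha>) \<noteq> 0" using ok by (simp add: Fsig_ok_def)
  have n2: "\<sigma> (x0 + x1 - \<alpha>) * \<sigma> (x0 - x1 - \<alpha>) \<noteq> 0" using ok by (simp add: Fsig_ok_def)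
  show "P x1 - P (x0 + \<alpha>) \<noteq> 0" "\<sigma> (x0 + \<alpha>) \<noteq> 0" using n1 unfolding i1 by auto
  show "P x1 - P (x0 - \<alpha>) \<noteq> 0" "\<sigma> (x0 - \<alpha>) \<noteq> 0" using n2 unfolding i2 by auto
  have s1: "\<sigma> x1 \<noteq> 0" using x1 sigma_zero by auto
  have "Fsig w1 w2 x0 x1 \<alpha> = (\<sigma> (x0 + \<alpha>) ^ 2 * \<sigma> x1 ^ 2 * (P x1 - P (x0 + \<alpha>))) / (\<sigma> (x0 - \<alpha>) ^ 2 * \<sigma> x1 ^ 2 * (P x1 - P (x0 - \<alpha>)))"
    unfolding Fsig_def i1 i2 ..
  also have "\<dots> = (\<sigma> x1 ^ 2 * (\<sigma> (x0 + \<alpha>) ^ 2 * (P x1 - P (x0 + \<alpha>)))) / (\<sigma> x1 ^ 2 * (\<sigma> (x0 - \<alpha>) ^ 2 * (P x1 - P (x0 - \<alpha>))))"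
    by (simp add: ac_simps)
  also have "\<dots> = \<sigma> (x0 + \<alpha>) ^ 2 * (P x1 - P (x0 + \<alpha>)) / (\<sigma> (x0 - \<alpha>) ^ 2 * (P x1 - P (x0 - \<alpha>)))"
    using s1 by (rule mult_divide_mult_cancel_left[OF power_not_zero])
  finally show "Fsig w1 w2 x0 x1 \<alpha> = \<sigma> (x0 + \<alpha>) ^ 2 * (P x1 - P (x0 + \<alpha>)) / (\<sigma> (x0 - \<alpha>) ^ 2 * (P x1 - P (x0 - \<alpha>)))" .
qed

lemma Fsig_ratio:
  assumes "x1 \<notin> L" "x2 \<notin> L" "x0 + \<alpha> \<notin> L" "x0 - \<alpha> \<notin> L" "Fsig_ok w1 w2 x0 x1 \<alpha>" "Fsig_ok w1 w2 x0 x2 \<alpha>"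
  shows "Fsig w1 w2 x0 x1 \<alpha> / Fsig w1 w2 x0 x2 \<alpha> =
    ((P x1 - P (x0 + \<alpha>)) * (P x2 - P (x0 - \<alpha>))) / ((P x1 - P (x0 - \<alpha>)) * (P x2 - P (x0 + \<alpha>)))"
  unfolding Fsig_eq(1)[OF assms(1,3,4,5)] Fsig_eq(1)[OF assms(2,3,4,6)]
  by (rule frac_ratio_aux) (use Fsig_eq(2-5)[OF assms(1,3,4,5)] Fsig_eq(2-5)[OF assms(2,3,4,6)] in auto)

lemma c_rel:
  assumes x: "x \<notin> L" and b: "\<beta> \<notin> L" "wp' w1 w2 \<beta> \<noteq> 0" and xb: "x + \<beta> \<notin> L" "x - \<beta> \<notin> L"
    and dx: "wp' w1 w2 x \<noteq> 0"
  shows "(P x - P \<beta>)^2 / wp' w1 w2 \<beta> * (P (x + \<beta>) - P (x - \<beta>)) = - wp' w1 w2 x"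
    and "P (x + \<beta>) - P (x - \<beta>) \<noteq> 0"
proof -
  have e: "P (x + \<beta>) - P (x - \<beta>) = - wp' w1 w2 x * wp' w1 w2 \<beta> / (P x - P \<beta>)^2"
    and ne: "P x \<noteq> P \<beta>" using wp_add[OF x b(1) xb] by auto
  have ne2: "(P x - P \<beta>)^2 \<noteq> 0" using ne by simp
  show "(P x - P \<beta>)^2 / wp' w1 w2 \<beta> * (P (x + \<beta>) - P (x - \<beta>)) = - wp' w1 w2 x"
    unfolding e using ne2 b(2) by (simp add: field_simps)
  show "P (x + \<beta>) - P (x - \<beta>) \<noteq> 0" unfolding e using ne2 b(2) dx by simp
qed

lemma pointwise_x:
  assumes b: "\<beta> \<notin> L" "wp' w1 w2 \<beta> \<noteq> 0"
    and xd: "xf differentiable (at t)" and X: "(tder xf t)^2 \<noteq> 1"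
    and nL: "xf t \<notin> L" "yv \<notin> L" "xn \<notin> L"
    and dx: "wp' w1 w2 (xf t) \<noteq> 0"
    and pm: "xf t + \<beta> \<notin> L" "xf t - \<beta> \<notin> L"
    and ok: "Fsig_ok w1 w2 (xf t) yv \<beta>" "Fsig_ok w1 w2 (xf t) xn \<beta>"
    and ne: "P xn \<noteq> P yv"
  shows "((tder xf t + 1) / (tder xf t - 1) = Fsig w1 w2 (xf t) yv \<beta> / Fsig w1 w2 (xf t) xn \<beta>) \<longleftrightarrow>
         (tder (\<lambda>s. P (xf s)) t = 2 * rho w1 w2 (P xn) (xf t) (P yv) \<beta> / (P xn - P yv))"
proof -
  have ch: "tder (\<lambda>s. P (xf s)) t = wp' w1 w2 (xf t) * tder xf t"
    by (rule tder_chain[OF xd P_deriv_at[OF nL(1)]])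
  have X1: "tder xf t \<noteq> 1" using X by auto
  have rat: "Fsig w1 w2 (xf t) yv \<beta> / Fsig w1 w2 (xf t) xn \<beta> =
    ((P yv - P (xf t + \<beta>)) * (P xn - P (xf t - \<beta>))) / ((P yv - P (xf t - \<beta>)) * (P xn - P (xf t + \<beta>)))"
    by (rule Fsig_ratio[OF nL(2,3) pm ok])
  have n1: "P yv - P (xf t - \<beta>) \<noteq> 0" by (rule Fsig_eq(3)[OF nL(2) pm ok(1)])
  have n2: "P xn - P (xf t + \<beta>) \<noteq> 0" by (rule Fsig_eq(2)[OF nL(3) pm ok(2)])
  have cr: "(P (xf t) - P \<beta>)^2 / wp' w1 w2 \<beta> * (P (xf t + \<beta>) - P (xf t - \<beta>)) = - wp' w1 w2 (xf t)"
    and n3: "P (xf t + \<beta>) - P (xf t - \<beta>) \<noteq> 0" using c_rel[OF nL(1) b pm dx] by auto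
  have n4: "P xn - P yv \<noteq> 0" using ne by simp
  have rho: "rho w1 w2 (P xn) (xf t) (P yv) \<beta> = (P (xf t) - P \<beta>)^2 / wp' w1 w2 \<beta> *
     (P xn * P yv - (P (xf t + \<beta>) + P (xf t - \<beta>)) * (P xn + P yv) / 2 + P (xf t + \<beta>) * P (xf t - \<beta>))"
    by (simp add: rho_def)
  show ?thesis unfolding ch rat rho
    by (rule alg1[OF X1 n1 n2 n3 n4 dx cr])
qed

lemma pointwise_y:
  assumes b: "\<beta> \<notin> L" "wp' w1 w2 \<beta> \<noteq> 0"
    and yd: "yf differentiable (at t)" and Y: "(tder yf t)^2 \<noteq> 1"
    and nL: "yf t \<notin> L" "xv \<notin> L" "yp \<notin> L"
    and dy: "wp' w1 w2 (yf t) \<noteq> 0"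
    and pm: "yf t + \<beta> \<notin> L" "yf t - \<beta> \<notin> L"
    and ok: "Fsig_ok w1 w2 (yf t) xv \<beta>" "Fsig_ok w1 w2 (yf t) yp \<beta>"
    and ne: "P xv \<noteq> P yp"
  shows "((tder yf t - 1) / (tder yf t + 1) = Fsig w1 w2 (yf t) xv \<beta> / Fsig w1 w2 (yf t) yp \<beta>) \<longleftrightarrow>
         (tder (\<lambda>s. P (yf s)) t = 2 * rho w1 w2 (P xv) (yf t) (P yp) \<beta> / (P xv - P yp))"
proof -
  have ch: "tder (\<lambda>s. P (yf s)) t = wp' w1 w2 (yf t) * tder yf t"
    by (rule tder_chain[OF yd P_deriv_at[OF nL(1)]])
  have Y1: "tder yf t \<noteq> -1" using Y by auto
  have rat: "Fsig w1 w2 (yf t) xv \<beta> / Fsig w1 w2 (yf t) yp \<beta> =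
    ((P xv - P (yf t + \<beta>)) * (P yp - P (yf t - \<beta>))) / ((P xv - P (yf t - \<beta>)) * (P yp - P (yf t + \<beta>)))"
    by (rule Fsig_ratio[OF nL(2,3) pm ok])
  have n1: "P xv - P (yf t - \<beta>) \<noteq> 0" by (rule Fsig_eq(3)[OF nL(2) pm ok(1)])
  have n2: "P yp - P (yf t + \<beta>) \<noteq> 0" by (rule Fsig_eq(2)[OF nL(3) pm ok(2)])
  have cr: "(P (yf t) - P \<beta>)^2 / wp' w1 w2 \<beta> * (P (yf t + \<beta>) - P (yf t - \<beta>)) = - wp' w1 w2 (yf t)"
    and n3: "P (yf t + \<beta>) - P (yf t - \<beta>) \<noteq> 0" using c_rel[OF nL(1) b pm dy] by auto
  have n4: "P xv - P yp \<noteq> 0" using ne by simp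
  have rho: "rho w1 w2 (P xv) (yf t) (P yp) \<beta> = (P (yf t) - P \<beta>)^2 / wp' w1 w2 \<beta> *
     (P xv * P yp - (P (yf t + \<beta>) + P (yf t - \<beta>)) * (P xv + P yp) / 2 + P (yf t + \<beta>) * P (yf t - \<beta>))"
    by (simp add: rho_def)
  show ?thesis unfolding ch rat rho
    by (rule alg2[OF Y1 n1 n2 n3 n4 dy cr])
qed


lemma core:
  assumes bS: "\<beta> \<notin> lattice (w1 / 2) (w2 / 2)"
  and h1: "\<forall>k. smooth_rc (x k) \<and> smooth_rc (y k)"
  and h2: "\<forall>k t. (tder (x k) t)^2 \<noteq> 1 \<and> (tder (y k) t)^2 \<noteq> 1"
  and h3: "\<forall>k t. x k t \<notin> lattice w1 w2 \<and> y k t \<notin> lattice w1 w2"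
  and h4: "\<forall>k t. wp' w1 w2 (x k t) \<noteq> 0 \<and> wp' w1 w2 (y k t) \<noteq> 0"
  and h5: "\<forall>k t. x k t + \<beta> \<notin> lattice w1 w2 \<and> x k t - \<beta> \<notin> lattice w1 w2 \<and>
               y k t + \<beta> \<notin> lattice w1 w2 \<and> y k t - \<beta> \<notin> lattice w1 w2"
  and h6: "\<forall>k t. Fsig_ok w1 w2 (x k t) (y k t) \<beta> \<and> Fsig_ok w1 w2 (x k t) (x (k+1) t) \<beta> \<and>
               Fsig_ok w1 w2 (y k t) (x k t) \<beta> \<and> Fsig_ok w1 w2 (y k t) (y (k-1) t) \<beta>"
  and h7: "\<forall>k t. wp w1 w2 (x (k+1) t) \<noteq> wp w1 w2 (y k t) \<and>
               wp w1 w2 (x k t) \<noteq> wp w1 w2 (y (k-1) t)"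
  shows "(\<forall>k t.
            (tder (x k) t + 1) / (tder (x k) t - 1) =
              Fsig w1 w2 (x k t) (y k t) \<beta> / Fsig w1 w2 (x k t) (x (k+1) t) \<beta> \<and>
            (tder (y k) t - 1) / (tder (y k) t + 1) =
              Fsig w1 w2 (y k t) (x k t) \<beta> / Fsig w1 w2 (y k t) (y (k-1) t) \<beta>)
         \<longleftrightarrow>
         (\<forall>k t.
            tder (\<lambda>s. wp w1 w2 (x k s)) t =
              2 * rho w1 w2 (wp w1 w2 (x (k+1) t)) (x k t) (wp w1 w2 (y k t)) \<beta>
                / (wp w1 w2 (x (k+1) t) - wp w1 w2 (y k t)) \<and>
            tder (\<lambda>s. wp w1 w2 (y k s)) t =
              2 * rho w1 w2 (wp w1 w2 (x k t)) (y k t) (wp w1 w2 (y (k-1) t)) \<beta>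
                / (wp w1 w2 (x k t) - wp w1 w2 (y (k-1) t)))"
proof -
  have b: "\<beta> \<notin> L" using half_sub bS by blast
  have b2: "2 * \<beta> \<notin> L" using half_2[OF bS] .
  have db: "wp' w1 w2 \<beta> \<noteq> 0" by (rule wp'_nonzero[OF b b2])
  have diff: "f differentiable (at t)" if "smooth_rc f" for f t
    using that unfolding smooth_rc_def by (metis funpow_0)
  have PX: "((tder (x k) t + 1) / (tder (x k) t - 1) =
              Fsig w1 w2 (x k t) (y k t) \<beta> / Fsig w1 w2 (x k t) (x (k+1) t) \<beta>) \<longleftrightarrow>
            (tder (\<lambda>s. wp w1 w2 (x k s)) t =
              2 * rho w1 w2 (wp w1 w2 (x (k+1) t)) (x k t) (wp w1 w2 (y k t)) \<beta>
                / (wp w1 w2 (x (k+1) t) - wp w1 w2 (y k t)))" for k t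
  proof (rule pointwise_x[OF b db])
    show "x k differentiable (at t)" using h1 diff by blast
  qed (use h2 h3[rule_format, of k t] h3[rule_format, of "k+1" t] h4 h5 h6 h7 in auto)
  have PY: "((tder (y k) t - 1) / (tder (y k) t + 1) =
              Fsig w1 w2 (y k t) (x k t) \<beta> / Fsig w1 w2 (y k t) (y (k-1) t) \<beta>) \<longleftrightarrow>
            (tder (\<lambda>s. wp w1 w2 (y k s)) t =
              2 * rho w1 w2 (wp w1 w2 (x k t)) (y k t) (wp w1 w2 (y (k-1) t)) \<beta>
                / (wp w1 w2 (x k t) - wp w1 w2 (y (k-1) t)))" for k t
  proof (rule pointwise_y[OF b db])
    show "y k differentiable (at t)" using h1 diff by blast
  qed (use h2 h3[rule_format, of k t] h3[rule_format, of "k-1" t] h4 h5 h6 h7 in auto)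
  show ?thesis using PX PY by blast
qed

end

theorem mainTheorem14:
  fixes w1 w2 :: complex
  assumes "lattice_nondeg w1 w2"
  shows "\<exists>S :: complex set. (\<forall>z. \<not> z islimpt S) \<and>
    (\<forall>\<beta>. \<beta> \<notin> S \<longrightarrow>
      (\<forall>(x :: int \<Rightarrow> real \<Rightarrow> complex) (y :: int \<Rightarrow> real \<Rightarrow> complex).
        (\<forall>k. smooth_rc (x k) \<and> smooth_rc (y k)) \<longrightarrow>
        (\<forall>k t. (tder (x k) t)^2 \<noteq> 1 \<and> (tder (y k) t)^2 \<noteq> 1) \<longrightarrow>
        (\<forall>k t. x k t \<notin> lattice w1 w2 \<and> y k t \<notin> lattice w1 w2) \<longrightarrow>
        (\<forall>k t. wp' w1 w2 (x k t) \<noteq> 0 \<and> wp' w1 w2 (y k t) \<noteq> 0) \<longrightarrow>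
        (\<forall>k t. x k t + \<beta> \<notin> lattice w1 w2 \<and> x k t - \<beta> \<notin> lattice w1 w2 \<and>
               y k t + \<beta> \<notin> lattice w1 w2 \<and> y k t - \<beta> \<notin> lattice w1 w2) \<longrightarrow>
        (\<forall>k t. Fsig_ok w1 w2 (x k t) (y k t) \<beta> \<and> Fsig_ok w1 w2 (x k t) (x (k+1) t) \<beta> \<and>
               Fsig_ok w1 w2 (y k t) (x k t) \<beta> \<and> Fsig_ok w1 w2 (y k t) (y (k-1) t) \<beta>) \<longrightarrow>
        (\<forall>k t. wp w1 w2 (x (k+1) t) \<noteq> wp w1 w2 (y k t) \<and>
               wp w1 w2 (x k t) \<noteq> wp w1 w2 (y (k-1) t)) \<longrightarrow>
        ((\<forall>k t.
            (tder (x k) t + 1) / (tder (x k) t - 1) =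
              Fsig w1 w2 (x k t) (y k t) \<beta> / Fsig w1 w2 (x k t) (x (k+1) t) \<beta> \<and>
            (tder (y k) t - 1) / (tder (y k) t + 1) =
              Fsig w1 w2 (y k t) (x k t) \<beta> / Fsig w1 w2 (y k t) (y (k-1) t) \<beta>)
         \<longleftrightarrow>
         (\<forall>k t.
            tder (\<lambda>s. wp w1 w2 (x k s)) t =
              2 * rho w1 w2 (wp w1 w2 (x (k+1) t)) (x k t) (wp w1 w2 (y k t)) \<beta>
                / (wp w1 w2 (x (k+1) t) - wp w1 w2 (y k t)) \<and>
            tder (\<lambda>s. wp w1 w2 (y k s)) t =
              2 * rho w1 w2 (wp w1 w2 (x k t)) (y k t) (wp w1 w2 (y (k-1) t)) \<beta>
                / (wp w1 w2 (x k t) - wp w1 w2 (y (k-1) t))))))"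
proof -
  interpret ell w1 w2 by unfold_locales (rule assms)
  show ?thesis
    apply (intro exI[of _ "lattice (w1 / 2) (w2 / 2)"] conjI allI impI)
     apply (rule half_not_islimpt)
    apply (rule core)
           apply assumption+
    done
qed

end
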